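(* Let $\Omega\subset\mathbb R^d$ be bounded open, $g\in L^\infty(\mathbb R^d)$ with $0<g\le1$ a.e., and let $u$ be a twisted eigenfunction corresponding to $\lambda_1^g(\Omega)$ with exactly two nodal domains $\Omega^+=\{u>0\}$ and $\Omega^-=\{u<0\}$. Let $u^+=u\chi_{\Omega^+}$, $u^-=-u\chi_{\Omega^-}$, and let $\xi\in\mathbb R$ be the number such that $\int_\Omega\nabla u\cdot\nabla\psi\,dx=\lambda_1^g(\Omega)\int_\Omega u\psi\,dx+\xi\int_\Omega g\psi\,dx$ for all $\psi\in H^1_0(\Omega)$. Then $\mathcal R(u^+)\le\mathcal R(u^-)$ if and only if $\xi\le0$; and $\mathcal R(u^+)=\mathcal R(u^-)$ if and only if $\xi=0$ (i.e., $u$ is a Dirichlet eigenfunction).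
   Context: $\mathcal R(w)=\int|\nabla w|^2/\int w^2$. $\lambda_1^g(\Omega)=\min\{\mathcal R(u):u\in H^1_0(\Omega)\setminus\{0\},\int_\Omega ug=0\}$; twisted eigenfunctions are minimizers. Nodal domains are connected components of the nonvanishing set of the (continuous) function. *)

theory Defs
  imports "HOL-Analysis.Analysis"
begin

definition C1c :: "'a::euclidean_space set \<Rightarrow> ('a \<Rightarrow> real) \<Rightarrow> ('a \<Rightarrow> 'a) \<Rightarrow> bool" where
  "C1c \<Omega> \<phi> D\<phi> \<longleftrightarrow>
     (\<forall>x. (\<phi> has_derivative (\<lambda>h. D\<phi> x \<bullet> h)) (at x)) \<and>
     continuous_on UNIV D\<phi> \<and>
     compact (closure {x. \<phi> x \<noteq> 0}) \<and> closure {x. \<phi> x \<noteq> 0} \<subseteq> \<Omega>"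

text \<open>u belongs to H^1_0(\<Omega>) (functions on R^d, the closure of C^1_c(\<Omega>) in the
  H^1 norm) and G is its weak gradient.\<close>
definition H10 :: "'a::euclidean_space set \<Rightarrow> ('a \<Rightarrow> real) \<Rightarrow> ('a \<Rightarrow> 'a) \<Rightarrow> bool" where
  "H10 \<Omega> u G \<longleftrightarrow>
     u \<in> borel_measurable lebesgue \<and> G \<in> borel_measurable lebesgue \<and>
     (\<exists>\<phi> D\<phi>. (\<forall>n. C1c \<Omega> (\<phi> n) (D\<phi> n)) \<and>
        (\<lambda>n. \<integral>\<^sup>+ x. ennreal ((\<phi> n x - u x)\<^sup>2) \<partial>lebesgue) \<longlonglongrightarrow> 0 \<and>
        (\<lambda>n. \<integral>\<^sup>+ x. ennreal ((norm (D\<phi> n x - G x))\<^sup>2) \<partial>lebesgue) \<longlonglongrightarrow> 0)"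

definition H10set :: "'a::euclidean_space set \<Rightarrow> ('a \<Rightarrow> real) set" where
  "H10set \<Omega> = {u. \<exists>G. H10 \<Omega> u G}"

text \<open>The weak gradient (unique up to null sets).\<close>
definition wgrad :: "'a::euclidean_space set \<Rightarrow> ('a \<Rightarrow> real) \<Rightarrow> ('a \<Rightarrow> 'a)" where
  "wgrad \<Omega> u = (SOME G. H10 \<Omega> u G)"

definition Rq :: "'a::euclidean_space set \<Rightarrow> ('a \<Rightarrow> real) \<Rightarrow> real" where
  "Rq \<Omega> w = (\<integral> x. (norm (wgrad \<Omega> w x))\<^sup>2 \<partial>lebesgue) / (\<integral> x. (w x)\<^sup>2 \<partial>lebesgue)"

definition twisted_adm :: "'a::euclidean_space set \<Rightarrow> ('a \<Rightarrow> real) \<Rightarrow> ('a \<Rightarrow> real) \<Rightarrow> bool" where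
  "twisted_adm \<Omega> g v \<longleftrightarrow> v \<in> H10set \<Omega> \<and> \<not> (AE x in lebesgue. v x = 0) \<and>
     (LINT x:\<Omega>|lebesgue. v x * g x) = 0"

definition lambda1g :: "'a::euclidean_space set \<Rightarrow> ('a \<Rightarrow> real) \<Rightarrow> real" where
  "lambda1g \<Omega> g = Inf {Rq \<Omega> v | v. twisted_adm \<Omega> g v}"

definition twisted_eigenfunction :: "'a::euclidean_space set \<Rightarrow> ('a \<Rightarrow> real) \<Rightarrow> ('a \<Rightarrow> real) \<Rightarrow> bool" where
  "twisted_eigenfunction \<Omega> g u \<longleftrightarrow> twisted_adm \<Omega> g u \<and> Rq \<Omega> u = lambda1g \<Omega> g"

definition nodal_domains :: "'a::euclidean_space set \<Rightarrow> ('a \<Rightarrow> real) \<Rightarrow> 'a set set" where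
  "nodal_domains \<Omega> u = components {x \<in> \<Omega>. u x \<noteq> 0}"

end

theory Submission
  imports Defs
begin


lemma lebesgue_is_completion: "lebesgue = completion lborel"
  by simp

lemma cont_cpt_integrable:
  fixes f :: "'a::euclidean_space \<Rightarrow> 'b::euclidean_space"
  assumes "continuous_on UNIV f" "compact K" "\<And>x. x \<notin> K \<Longrightarrow> f x = 0"
  shows "integrable lebesgue f"
proof -
  have "integrable lborel (\<lambda>x. indicator K x *\<^sub>R f x)"
    by (rule borel_integrable_compact[OF assms(2)]) (use assms(1) continuous_on_subset in blast)
  moreover have "(\<lambda>x. indicator K x *\<^sub>R f x) = f"
    using assms(3) by (auto simp: indicator_def)
  ultimately have "integrable lborel f" by simp
  moreover have "f \<in> borel_measurable lborel"
    using assms(1) by (simp add: borel_measurable_continuous_onI)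
  ultimately show ?thesis
    by (simp add: integrable_completion)
qed

lemma C1c_cont: assumes "C1c \<Omega> \<phi> D\<phi>" shows "continuous_on UNIV \<phi>"
proof -
  have "\<And>x. (\<phi> has_derivative (\<lambda>h. D\<phi> x \<bullet> h)) (at x)" using assms by (simp add: C1c_def)
  then show ?thesis
    by (meson continuous_at_imp_continuous_on has_derivative_continuous)
qed

lemma C1c_zero:
  assumes "C1c \<Omega> \<phi> D\<phi>" "x \<notin> closure {x. \<phi> x \<noteq> 0}"
  shows "\<phi> x = 0" "D\<phi> x = 0"
proof -
  have cl: "\<phi> y = 0" if "y \<notin> closure {x. \<phi> x \<noteq> 0}" for y
  proof (rule ccontr)
    assume "\<phi> y \<noteq> 0"
    then have "y \<in> {x. \<phi> x \<noteq> 0}" by simp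
    then have "y \<in> closure {x. \<phi> x \<noteq> 0}" by (rule subsetD[OF closure_subset])
    then show False using that by simp
  qed
  show "\<phi> x = 0" using cl assms(2) .
  let ?S = "- closure {x. \<phi> x \<noteq> 0}"
  have "((\<lambda>_. 0::real) has_derivative (\<lambda>_. 0)) (at x)" by simp
  then have d0: "(\<phi> has_derivative (\<lambda>_. 0)) (at x)"
  proof (rule has_derivative_transform_within_open[of _ _ _ _ ?S])
    show "open ?S" by (rule open_Compl) (rule closed_closure)
    show "x \<in> ?S" using assms(2) by simp
    show "0 = \<phi> y" if "y \<in> ?S" for y using cl[of y] that by simp
  qed
  have d1: "(\<phi> has_derivative (\<lambda>h. D\<phi> x \<bullet> h)) (at x)" using assms(1) by (simp add: C1c_def)
  have "(\<lambda>h. D\<phi> x \<bullet> h) = (\<lambda>_. 0)" by (rule has_derivative_unique[OF d1 d0])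
  then have "D\<phi> x \<bullet> D\<phi> x = 0" by metis
  then show "D\<phi> x = 0" by simp
qed

lemma C1c_meas:
  assumes "C1c \<Omega> \<phi> D\<phi>"
  shows "\<phi> \<in> borel_measurable lebesgue" "D\<phi> \<in> borel_measurable lebesgue"
proof -
  have "\<phi> \<in> borel_measurable borel" using C1c_cont[OF assms] by (simp add: borel_measurable_continuous_onI)
  then show "\<phi> \<in> borel_measurable lebesgue" by (simp add: measurable_completion)
  have "D\<phi> \<in> borel_measurable borel" using assms by (simp add: C1c_def borel_measurable_continuous_onI)
  then show "D\<phi> \<in> borel_measurable lebesgue" by (simp add: measurable_completion)
qed

lemma nn_tri:
  fixes a b c :: "'x \<Rightarrow> 'b::euclidean_space"
  assumes [measurable]: "a \<in> borel_measurable M" "b \<in> borel_measurable M" "c \<in> borel_measurable M"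
  shows "(\<integral>\<^sup>+x. ennreal ((norm (a x - c x))\<^sup>2) \<partial>M) \<le>
     2 * (\<integral>\<^sup>+x. ennreal ((norm (a x - b x))\<^sup>2) \<partial>M) + 2 * (\<integral>\<^sup>+x. ennreal ((norm (b x - c x))\<^sup>2) \<partial>M)"
proof -
  have pw: "ennreal ((norm (a x - c x))\<^sup>2) \<le> 2 * ennreal ((norm (a x - b x))\<^sup>2) + 2 * ennreal ((norm (b x - c x))\<^sup>2)" for x
  proof -
    have t: "norm (a x - c x) \<le> norm (a x - b x) + norm (b x - c x)"
      using norm_triangle_ineq[of "a x - b x" "b x - c x"] by simp
    have "(norm (a x - c x))\<^sup>2 \<le> (norm (a x - b x) + norm (b x - c x))\<^sup>2"
      using t by (simp add: power_mono)
    also have "\<dots> \<le> 2 * (norm (a x - b x))\<^sup>2 + 2 * (norm (b x - c x))\<^sup>2"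
      by (simp add: power2_sum) (smt (verit) sum_squares_ge_zero power2_diff zero_le_power2)
    finally have "ennreal ((norm (a x - c x))\<^sup>2) \<le> ennreal (2 * (norm (a x - b x))\<^sup>2 + 2 * (norm (b x - c x))\<^sup>2)"
      by (rule ennreal_leI)
    also have "\<dots> = 2 * ennreal ((norm (a x - b x))\<^sup>2) + 2 * ennreal ((norm (b x - c x))\<^sup>2)"
      by (simp add: ennreal_plus ennreal_mult)
    finally show ?thesis .
  qed
  have "(\<integral>\<^sup>+x. ennreal ((norm (a x - c x))\<^sup>2) \<partial>M) \<le>
     (\<integral>\<^sup>+x. 2 * ennreal ((norm (a x - b x))\<^sup>2) + 2 * ennreal ((norm (b x - c x))\<^sup>2) \<partial>M)"
    by (rule nn_integral_mono) (rule pw)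
  also have "\<dots> = 2 * (\<integral>\<^sup>+x. ennreal ((norm (a x - b x))\<^sup>2) \<partial>M) + 2 * (\<integral>\<^sup>+x. ennreal ((norm (b x - c x))\<^sup>2) \<partial>M)"
    by (simp add: nn_integral_add nn_integral_cmult)
  finally show ?thesis .
qed

lemma ennreal_sandwich0:
  fixes X Y Z :: "nat \<Rightarrow> ennreal"
  assumes "\<And>n. X n \<le> 2 * Y n + 2 * Z n" "Y \<longlonglongrightarrow> 0" "Z \<longlonglongrightarrow> 0"
  shows "X \<longlonglongrightarrow> 0"
proof (rule tendsto_sandwich[of "\<lambda>_. 0" _ _ "\<lambda>n. 2 * Y n + 2 * Z n"])
  have "(\<lambda>n. 2 * Y n + 2 * Z n) \<longlonglongrightarrow> 2 * 0 + 2 * 0"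
    by (intro tendsto_add ennreal_tendsto_cmult assms) simp_all
  then show "(\<lambda>n. 2 * Y n + 2 * Z n) \<longlonglongrightarrow> 0" by simp
qed (use assms in auto)



definition L2d :: "('x \<Rightarrow> 'b::real_normed_vector) \<Rightarrow> ('x \<Rightarrow> 'b) \<Rightarrow> 'x measure \<Rightarrow> ennreal" where
  "L2d f g M = (\<integral>\<^sup>+x. ennreal ((norm (f x - g x))\<^sup>2) \<partial>M)"

lemma H10_alt: "H10 \<Omega> u G \<longleftrightarrow>
     u \<in> borel_measurable lebesgue \<and> G \<in> borel_measurable lebesgue \<and>
     (\<exists>\<phi> D\<phi>. (\<forall>n. C1c \<Omega> (\<phi> n) (D\<phi> n)) \<and>
        (\<lambda>n. L2d (\<phi> n) u lebesgue) \<longlonglongrightarrow> 0 \<and> (\<lambda>n. L2d (D\<phi> n) G lebesgue) \<longlonglongrightarrow> 0)"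
  unfolding H10_def L2d_def by (simp add: real_norm_def power2_abs)

lemma L2d_tri:
  fixes a b c :: "'x \<Rightarrow> 'b::euclidean_space"
  assumes "a \<in> borel_measurable M" "b \<in> borel_measurable M" "c \<in> borel_measurable M"
  shows "L2d a c M \<le> 2 * L2d a b M + 2 * L2d b c M"
  unfolding L2d_def by (rule nn_tri[OF assms])

lemma L2d_tendsto_tri:
  fixes a b c :: "nat \<Rightarrow> 'x \<Rightarrow> 'b::euclidean_space"
  assumes "\<And>n. a n \<in> borel_measurable M" "\<And>n. b n \<in> borel_measurable M" "\<And>n. c n \<in> borel_measurable M"
    and "(\<lambda>n. L2d (a n) (b n) M) \<longlonglongrightarrow> 0" "(\<lambda>n. L2d (b n) (c n) M) \<longlonglongrightarrow> 0"
  shows "(\<lambda>n. L2d (a n) (c n) M) \<longlonglongrightarrow> 0"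
  by (rule ennreal_sandwich0[OF L2d_tri[OF assms(1-3)] assms(4,5)])

lemma L2d_sym: "L2d f g M = L2d g f M"
  unfolding L2d_def by (simp add: norm_minus_commute)

lemma L2d_zero_integrable:
  fixes f :: "'x \<Rightarrow> 'b::euclidean_space"
  assumes "f \<in> borel_measurable M"
  shows "integrable M (\<lambda>x. (norm (f x))\<^sup>2) \<longleftrightarrow> L2d f (\<lambda>_. 0) M < \<infinity>"
proof
  assume "integrable M (\<lambda>x. (norm (f x))\<^sup>2)"
  then have "L2d f (\<lambda>_. 0) M = ennreal (\<integral>x. (norm (f x))\<^sup>2 \<partial>M)"
    unfolding L2d_def by (simp add: nn_integral_eq_integral)
  then show "L2d f (\<lambda>_. 0) M < \<infinity>" by simp
next
  assume "L2d f (\<lambda>_. 0) M < \<infinity>"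
  then show "integrable M (\<lambda>x. (norm (f x))\<^sup>2)"
    unfolding L2d_def using assms by (intro integrableI_nonneg) auto
qed

lemma L2d_integrable_eq:
  fixes f :: "'x \<Rightarrow> 'b::euclidean_space"
  assumes "integrable M (\<lambda>x. (norm (f x))\<^sup>2)"
  shows "L2d f (\<lambda>_. 0) M = ennreal (\<integral>x. (norm (f x))\<^sup>2 \<partial>M)"
  using assms unfolding L2d_def by (simp add: nn_integral_eq_integral)

lemma sq_integrable_diff:
  fixes f g :: "'x \<Rightarrow> 'b::euclidean_space"
  assumes [measurable]: "f \<in> borel_measurable M" "g \<in> borel_measurable M"
    and "integrable M (\<lambda>x. (norm (f x))\<^sup>2)" "integrable M (\<lambda>x. (norm (g x))\<^sup>2)"
  shows "integrable M (\<lambda>x. (norm (f x - g x))\<^sup>2)"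
proof -
  have f: "L2d f (\<lambda>_. 0) M < \<infinity>" and g: "L2d g (\<lambda>_. 0) M < \<infinity>"
    using assms L2d_zero_integrable by blast+
  have "L2d (\<lambda>x. f x - g x) (\<lambda>_. 0) M = L2d f g M" unfolding L2d_def by simp
  also have "\<dots> \<le> 2 * L2d f (\<lambda>_. 0) M + 2 * L2d (\<lambda>_. 0) g M"
    by (rule L2d_tri) auto
  also have "\<dots> < \<infinity>" using f g by (simp add: L2d_sym[of "\<lambda>_. 0"] ennreal_mult_less_top)
  finally show ?thesis by (subst L2d_zero_integrable) auto
qed

lemma sq_integrable_from_approx:
  fixes f g :: "'x \<Rightarrow> 'b::euclidean_space"
  assumes [measurable]: "f \<in> borel_measurable M" "g \<in> borel_measurable M"
    and "L2d f g M < \<infinity>" "integrable M (\<lambda>x. (norm (g x))\<^sup>2)"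
  shows "integrable M (\<lambda>x. (norm (f x))\<^sup>2)"
proof -
  have g: "L2d g (\<lambda>_. 0) M < \<infinity>"
    using assms L2d_zero_integrable by blast
  have "L2d f (\<lambda>_. 0) M \<le> 2 * L2d f g M + 2 * L2d g (\<lambda>_. 0) M"
    by (rule L2d_tri) auto
  also have "\<dots> < \<infinity>" using g assms(3) by (simp add: ennreal_mult_less_top)
  finally show ?thesis by (subst L2d_zero_integrable) auto
qed

lemma C1c_sq_integrable:
  assumes "C1c \<Omega> \<phi> D\<phi>"
  shows "integrable lebesgue (\<lambda>x. (norm (\<phi> x))\<^sup>2)" "integrable lebesgue (\<lambda>x. (norm (D\<phi> x))\<^sup>2)"
proof -
  let ?K = "closure {x. \<phi> x \<noteq> 0}"
  have K: "compact ?K" using assms by (simp add: C1c_def)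
  have c1: "continuous_on UNIV \<phi>" by (rule C1c_cont[OF assms])
  have c2: "continuous_on UNIV D\<phi>" using assms by (simp add: C1c_def)
  show "integrable lebesgue (\<lambda>x. (norm (\<phi> x))\<^sup>2)"
  proof (rule cont_cpt_integrable[OF _ K])
    show "continuous_on UNIV (\<lambda>x. (norm (\<phi> x))\<^sup>2)" by (intro continuous_intros c1)
    show "(norm (\<phi> x))\<^sup>2 = 0" if "x \<notin> ?K" for x using C1c_zero(1)[OF assms that] by simp
  qed
  show "integrable lebesgue (\<lambda>x. (norm (D\<phi> x))\<^sup>2)"
  proof (rule cont_cpt_integrable[OF _ K])
    show "continuous_on UNIV (\<lambda>x. (norm (D\<phi> x))\<^sup>2)" by (intro continuous_intros c2)
    show "(norm (D\<phi> x))\<^sup>2 = 0" if "x \<notin> ?K" for x using C1c_zero(2)[OF assms that] by simp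
  qed
qed

lemma C1c_outside:
  assumes "C1c \<Omega> \<phi> D\<phi>" "x \<notin> \<Omega>"
  shows "\<phi> x = 0" "D\<phi> x = 0"
proof -
  have sub: "closure {x. \<phi> x \<noteq> 0} \<subseteq> \<Omega>" using assms(1) by (simp add: C1c_def)
  have "x \<notin> closure {x. \<phi> x \<noteq> 0}"
  proof
    assume "x \<in> closure {x. \<phi> x \<noteq> 0}"
    then have "x \<in> \<Omega>" by (rule subsetD[OF sub])
    then show False using assms(2) by simp
  qed
  then show "\<phi> x = 0" "D\<phi> x = 0" using C1c_zero[OF assms(1)] by blast+
qed

lemma L2d_outside_zero:
  fixes f :: "nat \<Rightarrow> 'x \<Rightarrow> 'b::euclidean_space"
  assumes [measurable]: "\<And>n. f n \<in> borel_measurable M" "g \<in> borel_measurable M" "\<Omega> \<in> sets M"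
    and "\<And>n x. x \<notin> \<Omega> \<Longrightarrow> f n x = 0" "(\<lambda>n. L2d (f n) g M) \<longlonglongrightarrow> 0"
  shows "AE x in M. x \<notin> \<Omega> \<longrightarrow> g x = 0"
proof -
  let ?c = "\<integral>\<^sup>+x. ennreal (indicator (- \<Omega>) x * (norm (g x))\<^sup>2) \<partial>M"
  have "?c \<le> L2d (f n) g M" for n
    unfolding L2d_def
    by (rule nn_integral_mono) (auto simp: indicator_def assms(4))
  then have "?c \<le> 0"
    by (intro tendsto_le[OF _ assms(5) tendsto_const]) auto
  then have "?c = 0" by simp
  then have "AE x in M. ennreal (indicator (- \<Omega>) x * (norm (g x))\<^sup>2) = 0"
    by (subst (asm) nn_integral_0_iff_AE) auto
  then show ?thesis
    by eventually_elim (auto simp: indicator_def)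
qed

lemma H10_facts:
  assumes "H10 \<Omega> u G" "open \<Omega>"
  shows "integrable lebesgue (\<lambda>x. (u x)\<^sup>2)" "integrable lebesgue (\<lambda>x. (norm (G x))\<^sup>2)"
    "AE x in lebesgue. x \<notin> \<Omega> \<longrightarrow> u x = 0" "AE x in lebesgue. x \<notin> \<Omega> \<longrightarrow> G x = 0"
    "u \<in> borel_measurable lebesgue" "G \<in> borel_measurable lebesgue"
proof -
  obtain \<phi> D\<phi> where C: "\<And>n. C1c \<Omega> (\<phi> n) (D\<phi> n)" and
    l1: "(\<lambda>n. L2d (\<phi> n) u lebesgue) \<longlonglongrightarrow> 0" and l2: "(\<lambda>n. L2d (D\<phi> n) G lebesgue) \<longlonglongrightarrow> 0"
    and mu[measurable]: "u \<in> borel_measurable lebesgue" and mG[measurable]: "G \<in> borel_measurable lebesgue"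
    using assms(1) unfolding H10_alt by blast
  show "u \<in> borel_measurable lebesgue" "G \<in> borel_measurable lebesgue" by fact+
  have [measurable]: "\<phi> n \<in> borel_measurable lebesgue" "D\<phi> n \<in> borel_measurable lebesgue" for n
    using C1c_meas[OF C] by auto
  have Om[measurable]: "\<Omega> \<in> sets lebesgue" using assms(2) by auto
  obtain n where n1: "L2d (\<phi> n) u lebesgue < 1"
    using order_tendstoD(2)[OF l1, of 1] by (auto simp: eventually_sequentially)
  obtain m where m1: "L2d (D\<phi> m) G lebesgue < 1"
    using order_tendstoD(2)[OF l2, of 1] by (auto simp: eventually_sequentially)
  have n1': "L2d (\<phi> n) u lebesgue < \<infinity>" by (rule order.strict_trans[OF n1]) simp
  have m1': "L2d (D\<phi> m) G lebesgue < \<infinity>" by (rule order.strict_trans[OF m1]) simp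
  have "integrable lebesgue (\<lambda>x. (norm (u x))\<^sup>2)"
    by (rule sq_integrable_from_approx[of _ _ "\<phi> n"]) 
       (use n1' C1c_sq_integrable[OF C] in \<open>auto simp: L2d_sym[of u]\<close>)
  then show "integrable lebesgue (\<lambda>x. (u x)\<^sup>2)" by simp
  show "integrable lebesgue (\<lambda>x. (norm (G x))\<^sup>2)"
    by (rule sq_integrable_from_approx[of _ _ "D\<phi> m"]) 
       (use m1' C1c_sq_integrable[OF C] in \<open>auto simp: L2d_sym[of G]\<close>)
  show "AE x in lebesgue. x \<notin> \<Omega> \<longrightarrow> u x = 0"
    by (rule L2d_outside_zero[OF _ _ Om _ l1]) (auto simp: C1c_outside[OF C])
  show "AE x in lebesgue. x \<notin> \<Omega> \<longrightarrow> G x = 0"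
    by (rule L2d_outside_zero[OF _ _ Om _ l2]) (auto simp: C1c_outside[OF C])
qed



lemma H10_meas: assumes "H10 \<Omega> u G" shows "u \<in> borel_measurable lebesgue" "G \<in> borel_measurable lebesgue"
  using assms by (auto simp: H10_def)

lemma H10_ae_seq:
  assumes "H10 \<Omega> u G" "open \<Omega>"
  shows "\<exists>\<phi> D\<phi>. (\<forall>n. C1c \<Omega> (\<phi> n) (D\<phi> n)) \<and> (\<lambda>n. L2d (\<phi> n) u lebesgue) \<longlonglongrightarrow> 0 \<and>
     (\<lambda>n. L2d (D\<phi> n) G lebesgue) \<longlonglongrightarrow> 0 \<and> (AE x in lebesgue. (\<lambda>n. \<phi> n x) \<longlonglongrightarrow> u x)"
proof -
  obtain \<phi> D\<phi> where C: "\<And>n. C1c \<Omega> (\<phi> n) (D\<phi> n)" and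
    l1: "(\<lambda>n. L2d (\<phi> n) u lebesgue) \<longlonglongrightarrow> 0" and l2: "(\<lambda>n. L2d (D\<phi> n) G lebesgue) \<longlonglongrightarrow> 0"
    and mu[measurable]: "u \<in> borel_measurable lebesgue" and mG[measurable]: "G \<in> borel_measurable lebesgue"
    using assms(1) unfolding H10_alt by blast
  have [measurable]: "\<phi> n \<in> borel_measurable lebesgue" "D\<phi> n \<in> borel_measurable lebesgue" for n
    using C1c_meas[OF C] by auto
  define h where "h n x = (norm (\<phi> n x - u x))\<^sup>2" for n x
  have uint: "integrable lebesgue (\<lambda>x. (norm (u x))\<^sup>2)" using H10_facts(1)[OF assms] by simp
  have hint: "integrable lebesgue (h n)" for n
    unfolding h_def by (rule sq_integrable_diff) (use uint C1c_sq_integrable[OF C] in auto)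
  have hnn: "\<And>n x. 0 \<le> h n x" by (simp add: h_def)
  have "L2d (\<phi> n) u lebesgue = ennreal (\<integral>x. h n x \<partial>lebesgue)" for n
    unfolding L2d_def h_def[symmetric] by (rule nn_integral_eq_integral[OF hint]) (simp add: h_def)
  with l1 have "(\<lambda>n. ennreal (\<integral>x. h n x \<partial>lebesgue)) \<longlonglongrightarrow> ennreal 0" by simp
  then have "(\<lambda>n. (\<integral>x. h n x \<partial>lebesgue)) \<longlonglongrightarrow> 0"
    by (subst (asm) tendsto_ennreal_iff) (auto intro!: always_eventually integral_nonneg simp: hnn)
  then have "(\<lambda>n. (\<integral>x. norm (h n x) \<partial>lebesgue)) \<longlonglongrightarrow> 0"
    by (simp add: h_def[abs_def])
  from tendsto_L1_AE_subseq[OF hint this]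
  obtain r :: "nat \<Rightarrow> nat" where r: "strict_mono r" and ae: "AE x in lebesgue. (\<lambda>n. h (r n) x) \<longlonglongrightarrow> 0"
    by blast
  have ae2: "AE x in lebesgue. (\<lambda>n. \<phi> (r n) x) \<longlonglongrightarrow> u x"
    using ae
  proof eventually_elim
    case (elim x)
    then have "(\<lambda>n. sqrt (h (r n) x)) \<longlonglongrightarrow> sqrt 0" by (intro tendsto_real_sqrt)
    then have "(\<lambda>n. norm (\<phi> (r n) x - u x)) \<longlonglongrightarrow> 0" by (simp add: h_def)
    then have "(\<lambda>n. \<phi> (r n) x - u x) \<longlonglongrightarrow> 0" by (simp only: tendsto_norm_zero_iff)
    then show ?case by (simp add: LIM_zero_iff)
  qed
  have s1: "(\<lambda>n. L2d (\<phi> (r n)) u lebesgue) \<longlonglongrightarrow> 0"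
    using LIMSEQ_subseq_LIMSEQ[OF l1 r] by (simp add: o_def)
  have s2: "(\<lambda>n. L2d (D\<phi> (r n)) G lebesgue) \<longlonglongrightarrow> 0"
    using LIMSEQ_subseq_LIMSEQ[OF l2 r] by (simp add: o_def)
  show ?thesis
    by (rule exI[of _ "\<lambda>n. \<phi> (r n)"], rule exI[of _ "\<lambda>n. D\<phi> (r n)"]) (intro conjI allI C s1 s2 ae2)
qed

lemma H10_closure:
  assumes H: "\<And>k. H10 \<Omega> (w k) (H k)" and lw: "(\<lambda>k. L2d (w k) w0 lebesgue) \<longlonglongrightarrow> 0"
    and lH: "(\<lambda>k. L2d (H k) H0 lebesgue) \<longlonglongrightarrow> 0"
    and [measurable]: "w0 \<in> borel_measurable lebesgue" "H0 \<in> borel_measurable lebesgue"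
  shows "H10 \<Omega> w0 H0"
proof -
  have [measurable]: "w k \<in> borel_measurable lebesgue" "H k \<in> borel_measurable lebesgue" for k
    using H10_meas[OF H] by auto
  have "\<forall>k. \<exists>\<phi> D\<phi>. (\<forall>n. C1c \<Omega> (\<phi> n) (D\<phi> n)) \<and>
        (\<lambda>n. L2d (\<phi> n) (w k) lebesgue) \<longlonglongrightarrow> 0 \<and> (\<lambda>n. L2d (D\<phi> n) (H k) lebesgue) \<longlonglongrightarrow> 0"
    using H unfolding H10_alt by blast
  then obtain \<Phi> D\<Phi> where C: "\<And>k n. C1c \<Omega> (\<Phi> k n) (D\<Phi> k n)"
    and l1: "\<And>k. (\<lambda>n. L2d (\<Phi> k n) (w k) lebesgue) \<longlonglongrightarrow> 0"
    and l2: "\<And>k. (\<lambda>n. L2d (D\<Phi> k n) (H k) lebesgue) \<longlonglongrightarrow> 0"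
    by metis
  define e where "e k = ennreal (inverse (real (Suc k)))" for k
  have e0: "e \<longlonglongrightarrow> 0"
  proof -
    have "(\<lambda>k. ennreal (inverse (real (Suc k)))) \<longlonglongrightarrow> ennreal 0"
      by (rule tendsto_ennrealI[OF LIMSEQ_inverse_real_of_nat])
    then show ?thesis by (simp add: e_def[abs_def])
  qed
  have epos: "e k > 0" for k by (simp add: e_def)
  have "\<exists>n. L2d (\<Phi> k n) (w k) lebesgue < e k \<and> L2d (D\<Phi> k n) (H k) lebesgue < e k" for k
  proof -
    have "eventually (\<lambda>n. L2d (\<Phi> k n) (w k) lebesgue < e k \<and> L2d (D\<Phi> k n) (H k) lebesgue < e k) sequentially"
      using order_tendstoD(2)[OF l1 epos] order_tendstoD(2)[OF l2 epos] by (rule eventually_conj)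
    then show ?thesis by (auto simp: eventually_sequentially)
  qed
  then obtain N where N: "\<And>k. L2d (\<Phi> k (N k)) (w k) lebesgue < e k \<and> L2d (D\<Phi> k (N k)) (H k) lebesgue < e k"
    by metis
  have [measurable]: "\<Phi> k n \<in> borel_measurable lebesgue" "D\<Phi> k n \<in> borel_measurable lebesgue" for k n
    using C1c_meas[OF C] by auto
  have a1: "(\<lambda>k. L2d (\<Phi> k (N k)) (w k) lebesgue) \<longlonglongrightarrow> 0"
    by (rule tendsto_sandwich[of "\<lambda>_. 0" _ _ e]) (auto intro!: always_eventually less_imp_le N[THEN conjunct1] e0)
  have a2: "(\<lambda>k. L2d (D\<Phi> k (N k)) (H k) lebesgue) \<longlonglongrightarrow> 0"
    by (rule tendsto_sandwich[of "\<lambda>_. 0" _ _ e]) (auto intro!: always_eventually less_imp_le N[THEN conjunct2] e0)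
  have "(\<lambda>k. L2d (\<Phi> k (N k)) w0 lebesgue) \<longlonglongrightarrow> 0"
    by (rule L2d_tendsto_tri[where b=w, OF _ _ _ a1]) (use lw in auto)
  moreover have "(\<lambda>k. L2d (D\<Phi> k (N k)) H0 lebesgue) \<longlonglongrightarrow> 0"
    by (rule L2d_tendsto_tri[where b=H, OF _ _ _ a2]) (use lH in auto)
  ultimately show ?thesis unfolding H10_alt using C
    by (intro conjI exI[of _ "\<lambda>k. \<Phi> k (N k)"] exI[of _ "\<lambda>k. D\<Phi> k (N k)"]) auto
qed

lemma C1c_neg:
  assumes "C1c \<Omega> \<phi> D\<phi>"
  shows "C1c \<Omega> (\<lambda>x. - \<phi> x) (\<lambda>x. - D\<phi> x)"
proof -
  have "((\<lambda>x. - \<phi> x) has_derivative (\<lambda>h. - D\<phi> x \<bullet> h)) (at x)" for x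
  proof -
    have "(\<phi> has_derivative (\<lambda>h. D\<phi> x \<bullet> h)) (at x)" using assms by (simp add: C1c_def)
    then have "((\<lambda>x. - \<phi> x) has_derivative (\<lambda>h. - (D\<phi> x \<bullet> h))) (at x)" by (rule has_derivative_minus)
    then show ?thesis by simp
  qed
  moreover have "continuous_on UNIV (\<lambda>x. - D\<phi> x)"
    using assms by (auto simp: C1c_def intro!: continuous_intros)
  ultimately show ?thesis using assms by (simp add: C1c_def)
qed

lemma H10_neg:
  assumes "H10 \<Omega> u G"
  shows "H10 \<Omega> (\<lambda>x. - u x) (\<lambda>x. - G x)"
proof -
  obtain \<phi> D\<phi> where C: "\<And>n. C1c \<Omega> (\<phi> n) (D\<phi> n)" and
    l1: "(\<lambda>n. L2d (\<phi> n) u lebesgue) \<longlonglongrightarrow> 0" and l2: "(\<lambda>n. L2d (D\<phi> n) G lebesgue) \<longlonglongrightarrow> 0"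
    and mu[measurable]: "u \<in> borel_measurable lebesgue" and mG[measurable]: "G \<in> borel_measurable lebesgue"
    using assms(1) unfolding H10_alt by blast
  have e1: "L2d (\<lambda>x. - \<phi> n x) (\<lambda>x. - u x) M = L2d (\<phi> n) u M" for n M
    unfolding L2d_def by (simp add: power2_commute)
  have e2: "L2d (\<lambda>x. - D\<phi> n x) (\<lambda>x. - G x) M = L2d (D\<phi> n) G M" for n M
    unfolding L2d_def by (metis minus_diff_minus norm_minus_cancel)
  show ?thesis unfolding H10_alt
    using C1c_neg[OF C] l1 l2 e1 e2
    by (intro conjI exI[of _ "\<lambda>n x. - \<phi> n x"] exI[of _ "\<lambda>n x. - D\<phi> n x"]) auto
qed

lemma H10_cong_AE:
  assumes "H10 \<Omega> u G" "v \<in> borel_measurable lebesgue" "K \<in> borel_measurable lebesgue"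
    "AE x in lebesgue. u x = v x" "AE x in lebesgue. G x = K x"
  shows "H10 \<Omega> v K"
proof -
  obtain \<phi> D\<phi> where C: "\<And>n. C1c \<Omega> (\<phi> n) (D\<phi> n)" and
    l1: "(\<lambda>n. L2d (\<phi> n) u lebesgue) \<longlonglongrightarrow> 0" and l2: "(\<lambda>n. L2d (D\<phi> n) G lebesgue) \<longlonglongrightarrow> 0"
    using assms(1) unfolding H10_alt by blast
  have "L2d (\<phi> n) u lebesgue = L2d (\<phi> n) v lebesgue" for n
    unfolding L2d_def by (rule nn_integral_cong_AE) (use assms(4) in auto)
  moreover have "L2d (D\<phi> n) G lebesgue = L2d (D\<phi> n) K lebesgue" for n
    unfolding L2d_def by (rule nn_integral_cong_AE) (use assms(5) in auto)
  ultimately show ?thesis unfolding H10_alt using C l1 l2 assms(2,3) by auto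
qed



lemma lip_from_deriv:
  fixes f f' :: "real \<Rightarrow> real"
  assumes d: "\<And>t. (f has_real_derivative f' t) (at t)" and b: "\<And>t. \<bar>f' t\<bar> \<le> 1"
  shows "\<bar>f a - f c\<bar> \<le> \<bar>a - c\<bar>"
proof -
  have *: "\<bar>f y - f x\<bar> \<le> \<bar>y - x\<bar>" if "x < y" for x y
  proof -
    have "\<exists>z. x < z \<and> z < y \<and> f y - f x = (y - x) * f' z" by (rule MVT2[OF that]) (rule d)
    then obtain z where "f y - f x = (y - x) * f' z" by blast
    then have "\<bar>f y - f x\<bar> = \<bar>y - x\<bar> * \<bar>f' z\<bar>" by (simp add: abs_mult)
    also have "\<dots> \<le> \<bar>y - x\<bar> * 1" by (rule mult_left_mono[OF b]) simp
    finally show ?thesis by simp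
  qed
  show ?thesis
  proof (cases a c rule: linorder_cases)
    case less then show ?thesis using *[OF less] by (simp add: abs_minus_commute)
  next
    case equal then show ?thesis by simp
  next
    case greater then show ?thesis using *[OF greater] by simp
  qed
qed

lemma C1c_chain:
  fixes f f' :: "real \<Rightarrow> real"
  assumes C: "C1c \<Omega> \<phi> D\<phi>" and f0: "f 0 = 0" and d: "\<And>t. (f has_real_derivative f' t) (at t)"
    and c: "continuous_on UNIV f'"
  shows "C1c \<Omega> (\<lambda>x. f (\<phi> x)) (\<lambda>x. f' (\<phi> x) *\<^sub>R D\<phi> x)"
proof -
  have der: "((\<lambda>x. f (\<phi> x)) has_derivative (\<lambda>h. (f' (\<phi> x) *\<^sub>R D\<phi> x) \<bullet> h)) (at x)" for x
  proof -
    have p: "(\<phi> has_derivative (\<lambda>h. D\<phi> x \<bullet> h)) (at x)" using C by (simp add: C1c_def)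
    have q: "(f has_derivative (\<lambda>h. f' (\<phi> x) * h)) (at (\<phi> x))"
      using d[of "\<phi> x"] by (simp add: has_field_derivative_def)
    have "((\<lambda>x. f (\<phi> x)) has_derivative (\<lambda>h. f' (\<phi> x) * (D\<phi> x \<bullet> h))) (at x)"
      using has_derivative_compose[OF p q] by (simp add: o_def)
    then show ?thesis by simp
  qed
  have pc: "continuous_on UNIV \<phi>" by (rule C1c_cont[OF C])
  have f'c: "continuous_on UNIV (\<lambda>x. f' (\<phi> x))"
    by (rule continuous_on_compose2[OF c pc]) auto
  have cont: "continuous_on UNIV (\<lambda>x. f' (\<phi> x) *\<^sub>R D\<phi> x)"
    using C f'c by (auto simp: C1c_def intro!: continuous_intros)
  have sub: "{x. f (\<phi> x) \<noteq> 0} \<subseteq> {x. \<phi> x \<noteq> 0}" using f0 by auto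
  then have sub2: "closure {x. f (\<phi> x) \<noteq> 0} \<subseteq> closure {x. \<phi> x \<noteq> 0}" by (rule closure_mono)
  have "compact (closure {x. \<phi> x \<noteq> 0} \<inter> closure {x. f (\<phi> x) \<noteq> 0})"
    using C by (intro compact_Int_closed) (auto simp: C1c_def)
  moreover have "closure {x. \<phi> x \<noteq> 0} \<inter> closure {x. f (\<phi> x) \<noteq> 0} = closure {x. f (\<phi> x) \<noteq> 0}"
    using sub2 by (rule Int_absorb1)
  ultimately have cpt: "compact (closure {x. f (\<phi> x) \<noteq> 0})" by simp
  have "closure {x. f (\<phi> x) \<noteq> 0} \<subseteq> \<Omega>"
    using sub2 C by (auto simp: C1c_def)
  then show ?thesis using der cont cpt unfolding C1c_def by blast
qed

lemma H10_chain:
  fixes f f' :: "real \<Rightarrow> real"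
  assumes H: "H10 \<Omega> u G" and op: "open \<Omega>" and f0: "f 0 = 0"
    and d: "\<And>t. (f has_real_derivative f' t) (at t)"
    and c: "continuous_on UNIV f'" and b: "\<And>t. \<bar>f' t\<bar> \<le> 1"
  shows "H10 \<Omega> (\<lambda>x. f (u x)) (\<lambda>x. f' (u x) *\<^sub>R G x)"
proof -
  obtain \<phi> D\<phi> where C: "\<And>n. C1c \<Omega> (\<phi> n) (D\<phi> n)" and
    l1: "(\<lambda>n. L2d (\<phi> n) u lebesgue) \<longlonglongrightarrow> 0" and l2: "(\<lambda>n. L2d (D\<phi> n) G lebesgue) \<longlonglongrightarrow> 0"
    and ae: "AE x in lebesgue. (\<lambda>n. \<phi> n x) \<longlonglongrightarrow> u x"
    using H10_ae_seq[OF H op] by blast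
  have [measurable]: "u \<in> borel_measurable lebesgue" "G \<in> borel_measurable lebesgue"
    using H10_meas[OF H] by auto
  have [measurable]: "\<phi> n \<in> borel_measurable lebesgue" "D\<phi> n \<in> borel_measurable lebesgue" for n
    using C1c_meas[OF C] by auto
  have fc: "continuous_on UNIV f"
    using d by (meson DERIV_isCont continuous_at_imp_continuous_on)
  have [measurable]: "f \<in> borel_measurable borel" "f' \<in> borel_measurable borel"
    using fc c by (auto intro: borel_measurable_continuous_onI)
  have Gint: "integrable lebesgue (\<lambda>x. (norm (G x))\<^sup>2)" using H10_facts(2)[OF H op] .
  have "L2d (\<lambda>x. f (\<phi> n x)) (\<lambda>x. f (u x)) lebesgue \<le> L2d (\<phi> n) u lebesgue" for n
    unfolding L2d_def
  proof (rule nn_integral_mono)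
    fix x
    have "\<bar>f (\<phi> n x) - f (u x)\<bar> \<le> \<bar>\<phi> n x - u x\<bar>" by (rule lip_from_deriv[OF d b])
    then have "(norm (f (\<phi> n x) - f (u x)))\<^sup>2 \<le> (norm (\<phi> n x - u x))\<^sup>2"
      by (simp add: abs_le_square_iff)
    then show "ennreal ((norm (f (\<phi> n x) - f (u x)))\<^sup>2) \<le> ennreal ((norm (\<phi> n x - u x))\<^sup>2)"
      by (rule ennreal_leI)
  qed
  then have L1: "(\<lambda>n. L2d (\<lambda>x. f (\<phi> n x)) (\<lambda>x. f (u x)) lebesgue) \<longlonglongrightarrow> 0"
    by (intro tendsto_sandwich[OF _ _ tendsto_const l1]) auto
  have A: "L2d (\<lambda>x. f' (\<phi> n x) *\<^sub>R D\<phi> n x) (\<lambda>x. f' (\<phi> n x) *\<^sub>R G x) lebesgue \<le> L2d (D\<phi> n) G lebesgue" for n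
    unfolding L2d_def
  proof (rule nn_integral_mono)
    fix x
    have "norm (f' (\<phi> n x) *\<^sub>R D\<phi> n x - f' (\<phi> n x) *\<^sub>R G x) = \<bar>f' (\<phi> n x)\<bar> * norm (D\<phi> n x - G x)"
      by (simp add: scaleR_diff_right[symmetric])
    also have "\<dots> \<le> 1 * norm (D\<phi> n x - G x)" by (rule mult_right_mono[OF b]) simp
    finally have "(norm (f' (\<phi> n x) *\<^sub>R D\<phi> n x - f' (\<phi> n x) *\<^sub>R G x))\<^sup>2 \<le> (norm (D\<phi> n x - G x))\<^sup>2"
      by (intro power_mono) auto
    then show "ennreal ((norm (f' (\<phi> n x) *\<^sub>R D\<phi> n x - f' (\<phi> n x) *\<^sub>R G x))\<^sup>2) \<le> ennreal ((norm (D\<phi> n x - G x))\<^sup>2)"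
      by (rule ennreal_leI)
  qed
  have A0: "(\<lambda>n. L2d (\<lambda>x. f' (\<phi> n x) *\<^sub>R D\<phi> n x) (\<lambda>x. f' (\<phi> n x) *\<^sub>R G x) lebesgue) \<longlonglongrightarrow> 0"
    by (intro tendsto_sandwich[OF _ _ tendsto_const l2]) (auto intro!: always_eventually A)
  define v where "v n x = (norm ((f' (\<phi> n x) - f' (u x)) *\<^sub>R G x))\<^sup>2" for n x
  have [measurable]: "v n \<in> borel_measurable lebesgue" for n unfolding v_def by measurable
  have B0: "(\<lambda>n. (\<integral>\<^sup>+x. norm ((\<lambda>x. 0::real) x - v n x) \<partial>lebesgue)) \<longlonglongrightarrow> 0"
  proof (rule nn_integral_dominated_convergence_norm[where w="\<lambda>x. 4 * (norm (G x))\<^sup>2"])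
    show "(\<integral>\<^sup>+x. ennreal (4 * (norm (G x))\<^sup>2) \<partial>lebesgue) < \<infinity>"
      using Gint by (simp add: nn_integral_eq_integral)
    show "AE x in lebesgue. norm (v j x) \<le> 4 * (norm (G x))\<^sup>2" for j
    proof (rule AE_I2)
      fix x
      have "\<bar>f' (\<phi> j x) - f' (u x)\<bar> \<le> 2" using b[of "\<phi> j x"] b[of "u x"] by linarith
      then have "\<bar>f' (\<phi> j x) - f' (u x)\<bar>\<^sup>2 \<le> 2\<^sup>2" by (intro power_mono) auto
      then have "(f' (\<phi> j x) - f' (u x))\<^sup>2 * (norm (G x))\<^sup>2 \<le> 4 * (norm (G x))\<^sup>2"
        by (intro mult_right_mono) auto
      then show "norm (v j x) \<le> 4 * (norm (G x))\<^sup>2"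
        by (simp add: v_def power_mult_distrib)
    qed
    show "AE x in lebesgue. (\<lambda>i. v i x) \<longlonglongrightarrow> 0"
      using ae
    proof eventually_elim
      case (elim x)
      have "isCont f' (u x)" using c by (simp add: continuous_on_eq_continuous_at)
      then have "(\<lambda>n. f' (\<phi> n x)) \<longlonglongrightarrow> f' (u x)" using elim by (rule isCont_tendsto_compose)
      then have "(\<lambda>n. (norm ((f' (\<phi> n x) - f' (u x)) *\<^sub>R G x))\<^sup>2) \<longlonglongrightarrow> (norm ((f' (u x) - f' (u x)) *\<^sub>R G x))\<^sup>2"
        by (intro tendsto_intros)
      then show ?case by (simp add: v_def)
    qed
  qed auto
  have B: "(\<lambda>n. L2d (\<lambda>x. f' (\<phi> n x) *\<^sub>R G x) (\<lambda>x. f' (u x) *\<^sub>R G x) lebesgue) \<longlonglongrightarrow> 0"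
  proof -
    have "L2d (\<lambda>x. f' (\<phi> n x) *\<^sub>R G x) (\<lambda>x. f' (u x) *\<^sub>R G x) lebesgue = (\<integral>\<^sup>+x. norm ((\<lambda>x. 0::real) x - v n x) \<partial>lebesgue)" for n
      unfolding L2d_def v_def by (simp add: scaleR_diff_left)
    then show ?thesis using B0 by simp
  qed
  have L2: "(\<lambda>n. L2d (\<lambda>x. f' (\<phi> n x) *\<^sub>R D\<phi> n x) (\<lambda>x. f' (u x) *\<^sub>R G x) lebesgue) \<longlonglongrightarrow> 0"
    by (rule L2d_tendsto_tri[OF _ _ _ A0 B]) auto
  show ?thesis unfolding H10_alt
    using C1c_chain[OF C f0 d c] L1 L2
    by (intro conjI exI[of _ "\<lambda>n x. f (\<phi> n x)"] exI[of _ "\<lambda>n x. f' (\<phi> n x) *\<^sub>R D\<phi> n x"]) auto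
qed



lemma msq_deriv: "((\<lambda>t::real. (max t 0)\<^sup>2) has_real_derivative 2 * max t 0) (at t)"
proof (cases t "0::real" rule: linorder_cases)
  case less
  have "((\<lambda>t::real. 0) has_real_derivative 2 * max t 0) (at t)" using less by simp
  then show ?thesis
    by (rule has_field_derivative_transform_within_open[of _ _ _ "{..<0}"]) (use less in auto)
next
  case greater
  have "((\<lambda>t::real. t\<^sup>2) has_real_derivative 2 * max t 0) (at t)"
    using greater by (auto intro!: derivative_eq_intros)
  then show ?thesis
    by (rule has_field_derivative_transform_within_open[of _ _ _ "{0<..}"]) (use greater in auto)
next
  case equal
  have "((\<lambda>y. ((max y 0)\<^sup>2 - (max 0 0)\<^sup>2) / (y - 0)) \<longlongrightarrow> 0) (at (0::real))"
  proof (rule Lim_null_comparison[where g="\<lambda>y. \<bar>y\<bar>"])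
    show "\<forall>\<^sub>F x in at 0. norm (((max x 0)\<^sup>2 - (max 0 0)\<^sup>2) / (x - 0)) \<le> \<bar>x\<bar>"
    proof (rule always_eventually, rule allI)
      fix x :: real
      show "norm (((max x 0)\<^sup>2 - (max 0 0)\<^sup>2) / (x - 0)) \<le> \<bar>x\<bar>"
        by (cases "x > 0") (auto simp: power2_eq_square abs_mult)
    qed
    have "((\<lambda>y::real. \<bar>y\<bar>) \<longlongrightarrow> \<bar>0\<bar>) (at 0)" by (intro tendsto_intros)
    then show "((\<lambda>y::real. \<bar>y\<bar>) \<longlongrightarrow> 0) (at 0)" by simp
  qed
  then show ?thesis using equal by (simp add: has_field_derivative_iff)
qed

definition pp :: "real \<Rightarrow> real \<Rightarrow> real" where
  "pp e t = sqrt ((max t 0)\<^sup>2 + e\<^sup>2) - e"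
definition pp' :: "real \<Rightarrow> real \<Rightarrow> real" where
  "pp' e t = max t 0 / sqrt ((max t 0)\<^sup>2 + e\<^sup>2)"

lemma pp_deriv:
  assumes "e > 0" shows "(pp e has_real_derivative pp' e t) (at t)"
proof -
  have pos: "(max t 0)\<^sup>2 + e\<^sup>2 > 0" using assms by (simp add: add_nonneg_pos)
  have d1: "((\<lambda>t. (max t 0)\<^sup>2 + e\<^sup>2) has_real_derivative 2 * max t 0 + 0) (at t)"
    by (rule DERIV_add[OF msq_deriv DERIV_const])
  have d2: "((\<lambda>t. sqrt ((max t 0)\<^sup>2 + e\<^sup>2)) has_real_derivative
          (inverse (sqrt ((max t 0)\<^sup>2 + e\<^sup>2)) / 2) * (2 * max t 0 + 0)) (at t)"
    by (rule DERIV_chain2[OF DERIV_real_sqrt[OF pos] d1])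
  have "((\<lambda>t. sqrt ((max t 0)\<^sup>2 + e\<^sup>2) - e) has_real_derivative
          (inverse (sqrt ((max t 0)\<^sup>2 + e\<^sup>2)) / 2) * (2 * max t 0 + 0) - 0) (at t)"
    by (rule DERIV_diff[OF d2 DERIV_const])
  moreover have "(inverse (sqrt ((max t 0)\<^sup>2 + e\<^sup>2)) / 2) * (2 * max t 0 + 0) - 0 = pp' e t"
    by (simp add: pp'_def field_simps)
  ultimately show ?thesis unfolding pp_def[abs_def] by simp
qed

lemma pp_0: "pp e 0 = 0" if "e > 0" using that by (simp add: pp_def)

lemma pp'_bound: assumes "e > 0" shows "0 \<le> pp' e t" "pp' e t \<le> 1" "\<bar>pp' e t\<bar> \<le> 1"
proof -
  let ?m = "max t 0"
  have s: "?m \<le> sqrt (?m\<^sup>2 + e\<^sup>2)"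
    by (rule real_le_rsqrt) simp
  have sp: "sqrt (?m\<^sup>2 + e\<^sup>2) > 0" using assms by (simp add: add_nonneg_pos)
  show "0 \<le> pp' e t" unfolding pp'_def using sp by simp
  show "pp' e t \<le> 1" unfolding pp'_def using s sp by simp
  then show "\<bar>pp' e t\<bar> \<le> 1" using \<open>0 \<le> pp' e t\<close> by simp
qed

lemma pp'_cont: assumes "e > 0" shows "continuous_on UNIV (pp' e)"
proof -
  have "\<forall>t\<in>UNIV. sqrt ((max t 0)\<^sup>2 + e\<^sup>2) \<noteq> 0" using assms
    by (simp add: add_nonneg_pos)
  then show ?thesis unfolding pp'_def[abs_def]
    by (intro continuous_intros) auto
qed

lemma pp_bound: assumes "e > 0" shows "0 \<le> pp e t" "pp e t \<le> max t 0"
proof -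
  let ?m = "max t 0"
  have "e \<le> sqrt (?m\<^sup>2 + e\<^sup>2)" by (rule real_le_rsqrt) simp
  then show "0 \<le> pp e t" by (simp add: pp_def)
  have "?m\<^sup>2 + e\<^sup>2 \<le> (?m + e)\<^sup>2" using assms by (simp add: power2_sum)
  then have "sqrt (?m\<^sup>2 + e\<^sup>2) \<le> sqrt ((?m + e)\<^sup>2)" by (rule real_sqrt_le_mono)
  also have "\<dots> = ?m + e" using assms by simp
  finally have "sqrt (?m\<^sup>2 + e\<^sup>2) \<le> ?m + e" .
  then show "pp e t \<le> max t 0" by (simp add: pp_def)
qed

definition ek :: "nat \<Rightarrow> real" where "ek k = inverse (real (Suc k))"

lemma ek_pos: "ek k > 0" by (simp add: ek_def)
lemma ek_lim: "ek \<longlonglongrightarrow> 0" unfolding ek_def[abs_def] by (rule LIMSEQ_inverse_real_of_nat)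

lemma pp_lim: "(\<lambda>k. pp (ek k) t) \<longlonglongrightarrow> max t 0"
proof -
  have "(\<lambda>k. sqrt ((max t 0)\<^sup>2 + (ek k)\<^sup>2) - ek k) \<longlonglongrightarrow> sqrt ((max t 0)\<^sup>2 + 0\<^sup>2) - 0"
    by (intro tendsto_intros ek_lim)
  then show ?thesis by (simp add: pp_def[abs_def])
qed

lemma pp'_lim: "(\<lambda>k. pp' (ek k) t) \<longlonglongrightarrow> (if t > 0 then 1 else 0)"
proof (cases "t > 0")
  case True
  have "(\<lambda>k. max t 0 / sqrt ((max t 0)\<^sup>2 + (ek k)\<^sup>2)) \<longlonglongrightarrow> max t 0 / sqrt ((max t 0)\<^sup>2 + 0\<^sup>2)"
    by (intro tendsto_intros ek_lim) (use True in simp)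
  then show ?thesis using True by (simp add: pp'_def[abs_def])
next
  case False
  then show ?thesis by (simp add: pp'_def[abs_def])
qed

lemma H10_pos:
  assumes H: "H10 \<Omega> u G" and op: "open \<Omega>"
  shows "H10 \<Omega> (\<lambda>x. max (u x) 0) (\<lambda>x. if u x > 0 then G x else 0)"
proof (rule H10_closure)
  have [measurable]: "u \<in> borel_measurable lebesgue" "G \<in> borel_measurable lebesgue"
    using H10_meas[OF H] by auto
  show "H10 \<Omega> (\<lambda>x. pp (ek k) (u x)) (\<lambda>x. pp' (ek k) (u x) *\<^sub>R G x)" for k
    by (rule H10_chain[OF H op pp_0[OF ek_pos] pp_deriv[OF ek_pos] pp'_cont[OF ek_pos] pp'_bound(3)[OF ek_pos]])
  show "(\<lambda>x. max (u x) 0) \<in> borel_measurable lebesgue" by measurable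
  show "(\<lambda>x. if u x > 0 then G x else 0) \<in> borel_measurable lebesgue" by measurable
  have uint: "integrable lebesgue (\<lambda>x. (u x)\<^sup>2)" using H10_facts(1)[OF H op] .
  have Gint: "integrable lebesgue (\<lambda>x. (norm (G x))\<^sup>2)" using H10_facts(2)[OF H op] .
  have [measurable]: "pp e \<in> borel_measurable borel" "pp' e \<in> borel_measurable borel" for e
    unfolding pp_def[abs_def] pp'_def[abs_def] by measurable
  show "(\<lambda>k. L2d (\<lambda>x. pp (ek k) (u x)) (\<lambda>x. max (u x) 0) lebesgue) \<longlonglongrightarrow> 0"
  proof -
    have "(\<lambda>k. (\<integral>\<^sup>+x. norm ((\<lambda>x. 0::real) x - (pp (ek k) (u x) - max (u x) 0)\<^sup>2) \<partial>lebesgue)) \<longlonglongrightarrow> 0"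
    proof (rule nn_integral_dominated_convergence_norm[where w="\<lambda>x. (u x)\<^sup>2"])
      show "(\<integral>\<^sup>+x. ennreal ((u x)\<^sup>2) \<partial>lebesgue) < \<infinity>"
        using uint by (simp add: nn_integral_eq_integral)
      show "AE x in lebesgue. norm ((pp (ek j) (u x) - max (u x) 0)\<^sup>2) \<le> (u x)\<^sup>2" for j
      proof (rule AE_I2)
        fix x
        have "\<bar>pp (ek j) (u x) - max (u x) 0\<bar> \<le> \<bar>u x\<bar>"
          using pp_bound[OF ek_pos, of j "u x"] by linarith
        then show "norm ((pp (ek j) (u x) - max (u x) 0)\<^sup>2) \<le> (u x)\<^sup>2"
          by (simp add: abs_le_square_iff)
      qed
      show "AE x in lebesgue. (\<lambda>k. (pp (ek k) (u x) - max (u x) 0)\<^sup>2) \<longlonglongrightarrow> 0"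
      proof (rule AE_I2)
        fix x
        have "(\<lambda>k. (pp (ek k) (u x) - max (u x) 0)\<^sup>2) \<longlonglongrightarrow> (max (u x) 0 - max (u x) 0)\<^sup>2"
          by (intro tendsto_intros pp_lim)
        then show "(\<lambda>k. (pp (ek k) (u x) - max (u x) 0)\<^sup>2) \<longlonglongrightarrow> 0" by simp
      qed
    qed auto
    then show ?thesis unfolding L2d_def by simp
  qed
  show "(\<lambda>k. L2d (\<lambda>x. pp' (ek k) (u x) *\<^sub>R G x) (\<lambda>x. if u x > 0 then G x else 0) lebesgue) \<longlonglongrightarrow> 0"
  proof -
    let ?c = "\<lambda>x. if u x > 0 then 1 else (0::real)"
    have eq: "(\<lambda>x. if u x > 0 then G x else 0) = (\<lambda>x. ?c x *\<^sub>R G x)" by auto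
    have "(\<lambda>k. (\<integral>\<^sup>+x. norm ((\<lambda>x. 0::real) x - (norm ((pp' (ek k) (u x) - ?c x) *\<^sub>R G x))\<^sup>2) \<partial>lebesgue)) \<longlonglongrightarrow> 0"
    proof (rule nn_integral_dominated_convergence_norm[where w="\<lambda>x. (norm (G x))\<^sup>2"])
      show "(\<integral>\<^sup>+x. ennreal ((norm (G x))\<^sup>2) \<partial>lebesgue) < \<infinity>"
        using Gint by (simp add: nn_integral_eq_integral)
      show "AE x in lebesgue. norm ((norm ((pp' (ek j) (u x) - ?c x) *\<^sub>R G x))\<^sup>2) \<le> (norm (G x))\<^sup>2" for j
      proof (rule AE_I2)
        fix x
        have "\<bar>pp' (ek j) (u x) - ?c x\<bar> \<le> 1"
          using pp'_bound(1,2)[OF ek_pos, of j "u x"] by auto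
        then have "\<bar>pp' (ek j) (u x) - ?c x\<bar> * norm (G x) \<le> 1 * norm (G x)"
          by (rule mult_right_mono) simp
        then have "(\<bar>pp' (ek j) (u x) - ?c x\<bar> * norm (G x))\<^sup>2 \<le> (norm (G x))\<^sup>2"
          by (intro power_mono) auto
        then show "norm ((norm ((pp' (ek j) (u x) - ?c x) *\<^sub>R G x))\<^sup>2) \<le> (norm (G x))\<^sup>2"
          by simp
      qed
      show "AE x in lebesgue. (\<lambda>k. (norm ((pp' (ek k) (u x) - ?c x) *\<^sub>R G x))\<^sup>2) \<longlonglongrightarrow> 0"
      proof (rule AE_I2)
        fix x
        have "(\<lambda>k. (norm ((pp' (ek k) (u x) - ?c x) *\<^sub>R G x))\<^sup>2) \<longlonglongrightarrow> (norm ((?c x - ?c x) *\<^sub>R G x))\<^sup>2"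
          by (intro tendsto_intros pp'_lim)
        then show "(\<lambda>k. (norm ((pp' (ek k) (u x) - ?c x) *\<^sub>R G x))\<^sup>2) \<longlonglongrightarrow> 0" by simp
      qed
    qed auto
    then show ?thesis unfolding L2d_def eq by (simp add: scaleR_diff_left)
  qed
qed



definition C1d :: "('a::euclidean_space \<Rightarrow> real) \<Rightarrow> ('a \<Rightarrow> 'a \<Rightarrow> real) \<Rightarrow> bool" where
  "C1d \<psi> \<psi>' \<longleftrightarrow> (\<forall>x. (\<psi> has_derivative \<psi>' x) (at x)) \<and> (\<forall>h. continuous_on UNIV (\<lambda>x. \<psi>' x h))"

lemma C1d_cont: "C1d \<psi> \<psi>' \<Longrightarrow> continuous_on UNIV \<psi>"
  unfolding C1d_def by (meson continuous_at_imp_continuous_on has_derivative_continuous)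

lemma poly_C1d:
  fixes \<psi> :: "'a::euclidean_space \<Rightarrow> real"
  assumes "real_polynomial_function \<psi>"
  shows "\<exists>\<psi>'. C1d \<psi> \<psi>'"
  using assms
proof (induction \<psi> rule: real_polynomial_function.induct)
  case (linear f)
  have "C1d f (\<lambda>x. f)" unfolding C1d_def
    using linear by (auto intro: bounded_linear_imp_has_derivative)
  then show ?case by blast
next
  case (const c)
  have "C1d (\<lambda>x. c) (\<lambda>x h. 0)" unfolding C1d_def by auto
  then show ?case by blast
next
  case (add f g)
  then obtain f' g' where f: "C1d f f'" and g: "C1d g g'" by blast
  have "C1d (\<lambda>x. f x + g x) (\<lambda>x h. f' x h + g' x h)"
    using f g unfolding C1d_def by (auto intro!: has_derivative_add continuous_intros)
  then show ?case by blast
next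
  case (mult f g)
  then obtain f' g' where f: "C1d f f'" and g: "C1d g g'" by blast
  have fc: "continuous_on UNIV f" and gc: "continuous_on UNIV g" using f g by (auto intro: C1d_cont)
  have "C1d (\<lambda>x. f x * g x) (\<lambda>x h. f x * g' x h + f' x h * g x)"
    using f g fc gc unfolding C1d_def by (auto intro!: has_derivative_mult continuous_intros)
  then show ?case by blast
qed

lemma C1d_linear: assumes "C1d \<psi> \<psi>'" shows "\<psi>' x (c *\<^sub>R h) = c * \<psi>' x h"
proof -
  have "bounded_linear (\<psi>' x)" using assms unfolding C1d_def by (blast intro: has_derivative_bounded_linear)
  then have "linear (\<psi>' x)" by (rule bounded_linear.linear)
  then show ?thesis by (simp add: linear_scale)
qed

lemma IBP0:
  assumes C: "C1c \<Omega> \<phi> D\<phi>" and P: "C1d \<psi> \<psi>'"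
  shows "integrable lebesgue (\<lambda>x. (D\<phi> x \<bullet> b) * \<psi> x)" "integrable lebesgue (\<lambda>x. \<phi> x * \<psi>' x b)"
    "(\<integral>x. (D\<phi> x \<bullet> b) * \<psi> x \<partial>lebesgue) = - (\<integral>x. \<phi> x * \<psi>' x b \<partial>lebesgue)"
proof -
  let ?K = "closure {x. \<phi> x \<noteq> 0}"
  have K: "compact ?K" using C by (simp add: C1c_def)
  have pc: "continuous_on UNIV \<phi>" by (rule C1c_cont[OF C])
  have Dc: "continuous_on UNIV D\<phi>" using C by (simp add: C1c_def)
  have qc: "continuous_on UNIV \<psi>" by (rule C1d_cont[OF P])
  have q'c: "continuous_on UNIV (\<lambda>x. \<psi>' x b)" using P by (simp add: C1d_def)
  have z: "\<phi> x = 0" "D\<phi> x = 0" if "x \<notin> ?K" for x using C1c_zero[OF C that] by auto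
  define F where "F x = \<phi> x * \<psi> x" for x
  define dF where "dF x = (D\<phi> x \<bullet> b) * \<psi> x + \<phi> x * \<psi>' x b" for x
  have c1: "continuous_on UNIV (\<lambda>x. (D\<phi> x \<bullet> b) * \<psi> x)" using Dc qc by (intro continuous_intros)
  have c2: "continuous_on UNIV (\<lambda>x. \<phi> x * \<psi>' x b)" using pc q'c by (intro continuous_intros)
  have cF: "continuous_on UNIV F" unfolding F_def[abs_def] using pc qc by (intro continuous_intros)
  have cdF: "continuous_on UNIV dF" unfolding dF_def[abs_def] using Dc qc pc q'c by (intro continuous_intros)
  show i1: "integrable lebesgue (\<lambda>x. (D\<phi> x \<bullet> b) * \<psi> x)"
  proof (rule cont_cpt_integrable[OF c1 K])
    fix x assume "x \<notin> ?K"
    from z[OF this] show "(D\<phi> x \<bullet> b) * \<psi> x = 0" by simp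
  qed
  show i2: "integrable lebesgue (\<lambda>x. \<phi> x * \<psi>' x b)"
  proof (rule cont_cpt_integrable[OF c2 K])
    fix x assume "x \<notin> ?K"
    from z[OF this] show "\<phi> x * \<psi>' x b = 0" by simp
  qed
  have Fz: "F x = 0" if "x \<notin> ?K" for x using z[OF that] by (simp add: F_def)
  have dFz: "dF x = 0" if "x \<notin> ?K" for x using z[OF that] by (simp add: dF_def)
  have mF[measurable]: "F \<in> borel_measurable borel" using cF by (rule borel_measurable_continuous_onI)
  have mdF[measurable]: "dF \<in> borel_measurable borel" using cdF by (rule borel_measurable_continuous_onI)
  have gder: "((\<lambda>s. F (x + s *\<^sub>R b)) has_real_derivative dF (x + s *\<^sub>R b)) (at s)" for x s
  proof -
    let ?y = "x + s *\<^sub>R b"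
    have d1: "(\<phi> has_derivative (\<lambda>h. D\<phi> ?y \<bullet> h)) (at ?y)" using C by (simp add: C1c_def)
    have d2: "(\<psi> has_derivative \<psi>' ?y) (at ?y)" using P by (simp add: C1d_def)
    have dFd: "(F has_derivative (\<lambda>h. \<phi> ?y * \<psi>' ?y h + (D\<phi> ?y \<bullet> h) * \<psi> ?y)) (at ?y)"
      unfolding F_def[abs_def] using has_derivative_mult[OF d1 d2] by simp
    have dl: "((\<lambda>s. x + s *\<^sub>R b) has_derivative (\<lambda>h. h *\<^sub>R b)) (at s)"
      by (auto intro!: derivative_eq_intros)
    have "((\<lambda>s. F (x + s *\<^sub>R b)) has_derivative
        (\<lambda>h. \<phi> ?y * \<psi>' ?y (h *\<^sub>R b) + (D\<phi> ?y \<bullet> (h *\<^sub>R b)) * \<psi> ?y)) (at s)"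
      using has_derivative_compose[OF dl dFd] by (simp add: o_def)
    moreover have "(\<lambda>h. \<phi> ?y * \<psi>' ?y (h *\<^sub>R b) + (D\<phi> ?y \<bullet> (h *\<^sub>R b)) * \<psi> ?y) = (\<lambda>h. dF ?y * h)"
      by (auto simp: dF_def C1d_linear[OF P] algebra_simps)
    ultimately show ?thesis by (simp add: has_field_derivative_def)
  qed
  obtain R where R0: "R > 0" and Rb: "\<And>x. x \<in> ?K \<Longrightarrow> norm x \<le> R"
    using compact_imp_bounded[OF K] unfolding bounded_pos by auto
  have "bounded (dF ` ?K)"
    using K cdF by (intro compact_imp_bounded compact_continuous_image) (auto intro: continuous_on_subset)
  then obtain C where C0: "C > 0" and Cb: "\<And>y. y \<in> ?K \<Longrightarrow> \<bar>dF y\<bar> \<le> C"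
    unfolding bounded_pos by auto
  have Cb': "\<bar>dF y\<bar> \<le> C" for y using Cb[of y] dFz[of y] C0 by (cases "y \<in> ?K") auto
  define t where "t n = inverse (real (Suc n))" for n
  have tpos: "t n > 0" "t n \<le> 1" for n by (auto simp: t_def field_simps)
  have tlim: "t \<longlonglongrightarrow> 0" unfolding t_def[abs_def] by (rule LIMSEQ_inverse_real_of_nat)
  define s where "s n x = (F (x + t n *\<^sub>R b) - F x) / t n" for n x
  let ?B = "cball (0::'a) (R + norm b)"
  define w where "w x = C * indicator ?B x" for x
  have intF: "integrable lborel F"
  proof -
    have "integrable lebesgue F"
    proof (rule cont_cpt_integrable[OF cF K])
      fix x assume "x \<notin> ?K"
      from Fz[OF this] show "F x = 0" .
    qed
    then show ?thesis by (simp add: integrable_completion)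
  qed
  have trans: "integrable lborel (\<lambda>x. F (c + x))" "(\<integral>x. F (c + x) \<partial>lborel) = (\<integral>x. F x \<partial>lborel)" for c :: 'a
  proof -
    have e: "distr lborel borel ((+) c) = lborel" by (rule lborel_distr_plus)
    have m: "(+) c \<in> measurable lborel borel" by simp
    show "integrable lborel (\<lambda>x. F (c + x))"
      using integrable_distr_eq[OF m mF] intF e by simp
    show "(\<integral>x. F (c + x) \<partial>lborel) = (\<integral>x. F x \<partial>lborel)"
      using integral_distr[OF m mF] e by simp
  qed
  have s0: "(\<integral>x. s n x \<partial>lborel) = 0" for n
  proof -
    have "(\<integral>x. s n x \<partial>lborel) = ((\<integral>x. F (t n *\<^sub>R b + x) \<partial>lborel) - (\<integral>x. F x \<partial>lborel)) / t n"
      unfolding s_def using trans(1)[of "t n *\<^sub>R b"] intF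
      by (simp add: add.commute)
    also have "\<dots> = 0" using trans(2) by simp
    finally show ?thesis .
  qed
  have lim: "(\<lambda>n. \<integral>x. s n x \<partial>lborel) \<longlonglongrightarrow> (\<integral>x. dF x \<partial>lborel)"
  proof (rule integral_dominated_convergence[where w=w])
    show "dF \<in> borel_measurable lborel" by simp
    show "s n \<in> borel_measurable lborel" for n unfolding s_def by measurable
    show "integrable lborel w" unfolding w_def
      by (intro integrable_mult_right integrable_real_indicator) (use emeasure_bounded_finite[OF bounded_cball] in auto)
    show "AE x in lborel. (\<lambda>n. s n x) \<longlonglongrightarrow> dF x"
    proof (rule AE_I2)
      fix x
      have "((\<lambda>y. (F (x + y *\<^sub>R b) - F (x + 0 *\<^sub>R b)) / (y - 0)) \<longlongrightarrow> dF (x + 0 *\<^sub>R b)) (at 0)"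
        using gder[of x 0] by (simp only: has_field_derivative_iff)
      then have l0: "((\<lambda>y. (F (x + y *\<^sub>R b) - F x) / y) \<longlongrightarrow> dF x) (at 0)" by simp
      have "filterlim t (at 0) sequentially"
        by (rule filterlim_atI[OF tlim]) (rule always_eventually, use tpos in \<open>auto simp: less_imp_neq[symmetric]\<close>)
      from filterlim_compose[OF l0 this] show "(\<lambda>n. s n x) \<longlonglongrightarrow> dF x"
        by (simp add: s_def o_def)
    qed
    show "AE x in lborel. norm (s n x) \<le> w x" for n
    proof (rule AE_I2)
      fix x
      show "norm (s n x) \<le> w x"
      proof (cases "x \<in> ?B")
        case True
        have "\<exists>z. 0 < z \<and> z < t n \<and> F (x + t n *\<^sub>R b) - F (x + 0 *\<^sub>R b) = (t n - 0) * dF (x + z *\<^sub>R b)"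
          by (rule MVT2[OF tpos(1)[of n], where f="\<lambda>s. F (x + s *\<^sub>R b)" and f'="\<lambda>s. dF (x + s *\<^sub>R b)"]) (rule gder)
        then obtain z where "F (x + t n *\<^sub>R b) - F x = t n * dF (x + z *\<^sub>R b)" by auto
        then have "s n x = dF (x + z *\<^sub>R b)" unfolding s_def using tpos(1)[of n] by simp
        then show ?thesis using Cb' True by (simp add: w_def)
      next
        case False
        then have nx: "norm x > R + norm b" by simp
        have "norm (x + t n *\<^sub>R b) \<ge> norm x - t n * norm b"
          using norm_triangle_ineq2[of x "- (t n *\<^sub>R b)"] tpos(1)[of n] by simp
        moreover have "t n * norm b \<le> norm b" using tpos[of n] by (simp add: mult_left_le_one_le)
        ultimately have "norm (x + t n *\<^sub>R b) > R" using nx by linarith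
        then have a: "x + t n *\<^sub>R b \<notin> ?K" using Rb by force
        have "norm x > R" using nx by (smt (verit) norm_ge_zero)
        then have "x \<notin> ?K" using Rb by force
        then show ?thesis using a False C0 by (simp add: s_def Fz w_def indicator_def)
      qed
    qed
  qed
  have "(\<integral>x. dF x \<partial>lborel) = 0"
    using lim s0 by (simp add: LIMSEQ_const_iff)
  then have "(\<integral>x. dF x \<partial>lebesgue) = 0" by (simp add: integral_completion)
  then have "(\<integral>x. (D\<phi> x \<bullet> b) * \<psi> x \<partial>lebesgue) + (\<integral>x. \<phi> x * \<psi>' x b \<partial>lebesgue) = 0"
    unfolding dF_def using i1 i2 by simp
  then show "(\<integral>x. (D\<phi> x \<bullet> b) * \<psi> x \<partial>lebesgue) = - (\<integral>x. \<phi> x * \<psi>' x b \<partial>lebesgue)" by simp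
qed



lemma CS_int:
  fixes f k :: "'x \<Rightarrow> 'b::euclidean_space"
  assumes [measurable]: "f \<in> borel_measurable M" "k \<in> borel_measurable M"
    and "integrable M (\<lambda>x. (norm (f x))\<^sup>2)" "integrable M (\<lambda>x. (norm (k x))\<^sup>2)"
  shows "integrable M (\<lambda>x. f x \<bullet> k x)"
proof (rule Bochner_Integration.integrable_bound)
  show "integrable M (\<lambda>x. (norm (f x))\<^sup>2 + (norm (k x))\<^sup>2)" using assms by auto
  show "(\<lambda>x. f x \<bullet> k x) \<in> borel_measurable M" by measurable
  show "AE x in M. norm (f x \<bullet> k x) \<le> norm ((norm (f x))\<^sup>2 + (norm (k x))\<^sup>2)"
  proof (rule AE_I2)
    fix x
    have "norm (f x \<bullet> k x) \<le> norm (f x) * norm (k x)" by (simp add: Cauchy_Schwarz_ineq2)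
    also have "\<dots> \<le> (norm (f x))\<^sup>2 + (norm (k x))\<^sup>2"
      using sum_squares_bound[of "norm (f x)" "norm (k x)"] mult_nonneg_nonneg[OF norm_ge_zero norm_ge_zero, of "f x" "k x"]
      by linarith
    finally show "norm (f x \<bullet> k x) \<le> norm ((norm (f x))\<^sup>2 + (norm (k x))\<^sup>2)" by simp
  qed
qed

lemma ennreal_sq_tendsto_0:
  fixes Y :: "nat \<Rightarrow> ennreal"
  assumes "(\<lambda>n. Y n ^ 2) \<longlonglongrightarrow> 0"
  shows "Y \<longlonglongrightarrow> 0"
proof (rule tendsto_zero_ennreal)
  fix r :: real assume r: "0 < r"
  have "ennreal (r\<^sup>2) > 0" using r by simp
  from order_tendstoD(2)[OF assms this]
  show "\<forall>\<^sub>F n in sequentially. Y n < ennreal r"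
  proof eventually_elim
    case (elim n)
    show ?case
    proof (rule ccontr)
      assume "\<not> Y n < ennreal r"
      then have "ennreal r \<le> Y n" by simp
      then have "ennreal r ^ 2 \<le> Y n ^ 2" by (rule power_mono) simp
      then show False using elim r by (simp add: ennreal_power)
    qed
  qed
qed

lemma CS_lim:
  fixes f :: "nat \<Rightarrow> 'x \<Rightarrow> 'b::euclidean_space"
  assumes [measurable]: "\<And>n. f n \<in> borel_measurable M" "g \<in> borel_measurable M" "k \<in> borel_measurable M"
    and kint: "integrable M (\<lambda>x. (norm (k x))\<^sup>2)" and l: "(\<lambda>n. L2d (f n) g M) \<longlonglongrightarrow> 0"
  shows "(\<lambda>n. \<integral>\<^sup>+x. norm (f n x \<bullet> k x - g x \<bullet> k x) \<partial>M) \<longlonglongrightarrow> 0"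
proof -
  define Y where "Y n = (\<integral>\<^sup>+x. ennreal (norm (f n x - g x)) * ennreal (norm (k x)) \<partial>M)" for n
  define Kk where "Kk = (\<integral>\<^sup>+x. ennreal (norm (k x)) ^ 2 \<partial>M)"
  have Kk: "Kk < \<infinity>"
  proof -
    have "Kk = ennreal (\<integral>x. (norm (k x))\<^sup>2 \<partial>M)"
      unfolding Kk_def using kint by (simp add: ennreal_power nn_integral_eq_integral)
    then show ?thesis by simp
  qed
  have Yb: "Y n ^ 2 \<le> L2d (f n) g M * Kk" for n
  proof -
    have "Y n ^ 2 \<le> (\<integral>\<^sup>+x. ennreal (norm (f n x - g x)) ^ 2 \<partial>M) * Kk"
      unfolding Y_def Kk_def by (rule Cauchy_Schwarz_nn_integral) auto
    also have "(\<integral>\<^sup>+x. ennreal (norm (f n x - g x)) ^ 2 \<partial>M) = L2d (f n) g M"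
      unfolding L2d_def by (simp add: ennreal_power)
    finally show ?thesis .
  qed
  have "(\<lambda>n. Kk * L2d (f n) g M) \<longlonglongrightarrow> Kk * 0"
    using Kk l by (intro ennreal_tendsto_cmult) auto
  then have lk: "(\<lambda>n. L2d (f n) g M * Kk) \<longlonglongrightarrow> 0" by (simp add: mult.commute)
  have "(\<lambda>n. Y n ^ 2) \<longlonglongrightarrow> 0"
    by (rule tendsto_sandwich[OF always_eventually always_eventually tendsto_const lk]) (auto intro: Yb)
  then have Y0: "Y \<longlonglongrightarrow> 0" by (rule ennreal_sq_tendsto_0)
  have Xb: "(\<integral>\<^sup>+x. norm (f n x \<bullet> k x - g x \<bullet> k x) \<partial>M) \<le> Y n" for n
    unfolding Y_def
  proof (rule nn_integral_mono)
    fix x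
    have "norm (f n x \<bullet> k x - g x \<bullet> k x) = norm ((f n x - g x) \<bullet> k x)" by (simp add: inner_diff_left)
    also have "\<dots> \<le> norm (f n x - g x) * norm (k x)" by (simp add: Cauchy_Schwarz_ineq2)
    finally show "ennreal (norm (f n x \<bullet> k x - g x \<bullet> k x)) \<le> ennreal (norm (f n x - g x)) * ennreal (norm (k x))"
      by (simp add: ennreal_mult'[symmetric] ennreal_leI)
  qed
  show ?thesis
    by (rule tendsto_sandwich[OF always_eventually always_eventually tendsto_const Y0]) (simp, rule allI, rule Xb)
qed

lemma CS_conv:
  fixes f :: "nat \<Rightarrow> 'x \<Rightarrow> 'b::euclidean_space"
  assumes [measurable]: "\<And>n. f n \<in> borel_measurable M" "g \<in> borel_measurable M" "k \<in> borel_measurable M"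
    and "\<And>n. integrable M (\<lambda>x. (norm (f n x))\<^sup>2)" "integrable M (\<lambda>x. (norm (g x))\<^sup>2)"
    and kint: "integrable M (\<lambda>x. (norm (k x))\<^sup>2)" and l: "(\<lambda>n. L2d (f n) g M) \<longlonglongrightarrow> 0"
  shows "(\<lambda>n. \<integral>x. f n x \<bullet> k x \<partial>M) \<longlonglongrightarrow> (\<integral>x. g x \<bullet> k x \<partial>M)"
  by (rule tendsto_L1_int[OF CS_int CS_int CS_lim]) (use assms in auto)

lemma bounded_open_fin:
  assumes "open \<Omega>" "bounded (\<Omega>::'a::euclidean_space set)"
  shows "\<Omega> \<in> sets lebesgue" "emeasure lebesgue \<Omega> < \<infinity>"
proof -
  show "\<Omega> \<in> sets lebesgue" using assms by auto
  then have "\<Omega> \<in> lmeasurable" using assms by (intro bounded_set_imp_lmeasurable)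
  then have "\<Omega> \<in> {A \<in> sets lebesgue. emeasure lebesgue A < \<infinity>}" by (simp only: fmeasurable_def)
  then show "emeasure lebesgue \<Omega> < \<infinity>" by blast
qed

lemma bounded_ind_L2:
  fixes k :: "'a::euclidean_space \<Rightarrow> 'b::euclidean_space"
  assumes "open \<Omega>" "bounded \<Omega>" "k \<in> borel_measurable lebesgue" "\<And>x. x \<in> \<Omega> \<Longrightarrow> norm (k x) \<le> C"
  shows "integrable lebesgue (\<lambda>x. (norm (indicator \<Omega> x *\<^sub>R k x))\<^sup>2)"
proof (rule Bochner_Integration.integrable_bound)
  note fin = bounded_open_fin[OF assms(1,2)]
  show "integrable lebesgue (\<lambda>x. C\<^sup>2 * indicator \<Omega> x)"
    by (intro integrable_mult_right integrable_real_indicator fin(1) fin(2))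
  show "(\<lambda>x. (norm (indicator \<Omega> x *\<^sub>R k x))\<^sup>2) \<in> borel_measurable lebesgue"
    using fin assms(3) by measurable
  show "AE x in lebesgue. norm ((norm (indicator \<Omega> x *\<^sub>R k x))\<^sup>2) \<le> norm (C\<^sup>2 * indicator \<Omega> x)"
  proof (rule AE_I2)
    fix x
    show "norm ((norm (indicator \<Omega> x *\<^sub>R k x))\<^sup>2) \<le> norm (C\<^sup>2 * indicator \<Omega> x)"
    proof (cases "x \<in> \<Omega>")
      case True
      then have "norm (k x) \<le> C" by (rule assms(4))
      then have "(norm (k x))\<^sup>2 \<le> C\<^sup>2" by (intro power_mono) auto
      then show ?thesis using True by simp
    qed simp
  qed
qed

lemma cont_bounded_on_bounded:
  fixes k :: "'a::euclidean_space \<Rightarrow> 'b::euclidean_space"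
  assumes "bounded \<Omega>" "continuous_on UNIV k"
  obtains C where "\<And>x. x \<in> \<Omega> \<Longrightarrow> norm (k x) \<le> C"
proof -
  have "compact (closure \<Omega>)" using assms(1) by (simp add: compact_closure)
  then have "bounded (k ` closure \<Omega>)"
    using assms(2) by (intro compact_imp_bounded compact_continuous_image) (auto intro: continuous_on_subset)
  then obtain C where "\<forall>y\<in>k ` closure \<Omega>. norm y \<le> C" unfolding bounded_pos by auto
  then have "\<And>x. x \<in> \<Omega> \<Longrightarrow> norm (k x) \<le> C" using closure_subset by fastforce
  then show ?thesis using that by blast
qed

lemma IBP_H10:
  assumes H: "H10 \<Omega> u G" and op: "open \<Omega>" and bd: "bounded \<Omega>" and P: "C1d \<psi> \<psi>'"
  shows "integrable lebesgue (\<lambda>x. G x \<bullet> (indicator \<Omega> x *\<^sub>R (\<psi> x *\<^sub>R b)))"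
    "(\<integral>x. G x \<bullet> (indicator \<Omega> x *\<^sub>R (\<psi> x *\<^sub>R b)) \<partial>lebesgue) = - (\<integral>x. u x \<bullet> (indicator \<Omega> x *\<^sub>R \<psi>' x b) \<partial>lebesgue)"
proof -
  note fin = bounded_open_fin[OF op bd]
  have [measurable]: "\<Omega> \<in> sets lebesgue" using fin by simp
  obtain \<phi> D\<phi> where C: "\<And>n. C1c \<Omega> (\<phi> n) (D\<phi> n)" and
    l1: "(\<lambda>n. L2d (\<phi> n) u lebesgue) \<longlonglongrightarrow> 0" and l2: "(\<lambda>n. L2d (D\<phi> n) G lebesgue) \<longlonglongrightarrow> 0"
    and mu[measurable]: "u \<in> borel_measurable lebesgue" and mG[measurable]: "G \<in> borel_measurable lebesgue"
    using H unfolding H10_alt by blast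
  have [measurable]: "\<phi> n \<in> borel_measurable lebesgue" "D\<phi> n \<in> borel_measurable lebesgue" for n
    using C1c_meas[OF C] by auto
  have qc: "continuous_on UNIV \<psi>" by (rule C1d_cont[OF P])
  have q'c: "continuous_on UNIV (\<lambda>x. \<psi>' x b)" using P by (simp add: C1d_def)
  have [measurable]: "\<psi> \<in> borel_measurable lebesgue" "(\<lambda>x. \<psi>' x b) \<in> borel_measurable lebesgue"
  proof -
    have "\<psi> \<in> borel_measurable borel" "(\<lambda>x. \<psi>' x b) \<in> borel_measurable borel"
      using qc q'c by (auto intro: borel_measurable_continuous_onI)
    then show "\<psi> \<in> borel_measurable lebesgue" "(\<lambda>x. \<psi>' x b) \<in> borel_measurable lebesgue"
      by (simp_all add: measurable_completion)
  qed
  define k1 where "k1 x = indicator \<Omega> x *\<^sub>R (\<psi> x *\<^sub>R b)" for x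
  define k2 where "k2 x = indicator \<Omega> x *\<^sub>R \<psi>' x b" for x
  have [measurable]: "k1 \<in> borel_measurable lebesgue" "k2 \<in> borel_measurable lebesgue"
    unfolding k1_def[abs_def] k2_def[abs_def] by measurable
  have qbc: "continuous_on UNIV (\<lambda>x. \<psi> x *\<^sub>R b)" using qc by (intro continuous_intros)
  obtain C1 where C1: "\<And>x. x \<in> \<Omega> \<Longrightarrow> norm (\<psi> x *\<^sub>R b) \<le> C1"
    using cont_bounded_on_bounded[OF bd qbc] by blast
  obtain C2 where C2: "\<And>x. x \<in> \<Omega> \<Longrightarrow> norm (\<psi>' x b) \<le> C2"
    using cont_bounded_on_bounded[OF bd q'c] by blast
  have k1L: "integrable lebesgue (\<lambda>x. (norm (k1 x))\<^sup>2)"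
    unfolding k1_def by (rule bounded_ind_L2[OF op bd _ C1]) measurable
  have k2L: "integrable lebesgue (\<lambda>x. (norm (k2 x))\<^sup>2)"
    unfolding k2_def by (rule bounded_ind_L2[OF op bd _ C2]) measurable
  have uL: "integrable lebesgue (\<lambda>x. (norm (u x))\<^sup>2)" using H10_facts(1)[OF H op] by simp
  have GL: "integrable lebesgue (\<lambda>x. (norm (G x))\<^sup>2)" using H10_facts(2)[OF H op] .
  have pL: "integrable lebesgue (\<lambda>x. (norm (\<phi> n x))\<^sup>2)" "integrable lebesgue (\<lambda>x. (norm (D\<phi> n x))\<^sup>2)" for n
    using C1c_sq_integrable[OF C] by auto
  have a: "(\<lambda>n. \<integral>x. D\<phi> n x \<bullet> k1 x \<partial>lebesgue) \<longlonglongrightarrow> (\<integral>x. G x \<bullet> k1 x \<partial>lebesgue)"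
    by (rule CS_conv[OF _ _ _ pL(2) GL k1L l2]) auto
  have c: "(\<lambda>n. \<integral>x. \<phi> n x \<bullet> k2 x \<partial>lebesgue) \<longlonglongrightarrow> (\<integral>x. u x \<bullet> k2 x \<partial>lebesgue)"
    by (rule CS_conv[OF _ _ _ pL(1) uL k2L l1]) auto
  have eq1: "D\<phi> n x \<bullet> k1 x = (D\<phi> n x \<bullet> b) * \<psi> x" for n x
    using C1c_outside(2)[OF C, of x n] by (cases "x \<in> \<Omega>") (auto simp: k1_def)
  have eq2: "\<phi> n x \<bullet> k2 x = \<phi> n x * \<psi>' x b" for n x
    using C1c_outside(1)[OF C, of x n] by (cases "x \<in> \<Omega>") (auto simp: k2_def)
  have "(\<integral>x. D\<phi> n x \<bullet> k1 x \<partial>lebesgue) = - (\<integral>x. \<phi> n x \<bullet> k2 x \<partial>lebesgue)" for n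
    unfolding eq1 eq2 by (rule IBP0(3)[OF C P])
  then have "(\<lambda>n. \<integral>x. D\<phi> n x \<bullet> k1 x \<partial>lebesgue) \<longlonglongrightarrow> - (\<integral>x. u x \<bullet> k2 x \<partial>lebesgue)"
    using tendsto_minus[OF c] by simp
  with a show "(\<integral>x. G x \<bullet> (indicator \<Omega> x *\<^sub>R (\<psi> x *\<^sub>R b)) \<partial>lebesgue) = - (\<integral>x. u x \<bullet> (indicator \<Omega> x *\<^sub>R \<psi>' x b) \<partial>lebesgue)"
    unfolding k1_def[symmetric] k2_def[symmetric] by (rule LIMSEQ_unique)
  show "integrable lebesgue (\<lambda>x. G x \<bullet> (indicator \<Omega> x *\<^sub>R (\<psi> x *\<^sub>R b)))"
    unfolding k1_def[symmetric] by (rule CS_int[OF _ _ GL k1L]) auto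
qed



lemma grad_unique:
  assumes H1: "H10 \<Omega> u G1" and H2: "H10 \<Omega> u G2" and op: "open \<Omega>" and bd: "bounded \<Omega>"
  shows "AE x in lebesgue. G1 x = G2 x"
proof -
  note fin = bounded_open_fin[OF op bd]
  have [measurable]: "\<Omega> \<in> sets lebesgue" using fin by simp
  have [measurable]: "G1 \<in> borel_measurable lebesgue" "G2 \<in> borel_measurable lebesgue"
    using H10_meas(2)[OF H1] H10_meas(2)[OF H2] by auto
  define N where "N x = G1 x - G2 x" for x
  have mN[measurable]: "N \<in> borel_measurable lebesgue" unfolding N_def[abs_def] by measurable
  have NL: "integrable lebesgue (\<lambda>x. (norm (N x))\<^sup>2)"
    unfolding N_def by (rule sq_integrable_diff) (use H10_facts(2)[OF H1 op] H10_facts(2)[OF H2 op] in auto)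
  have S1: "integrable lebesgue (\<lambda>x. N x \<bullet> (indicator \<Omega> x *\<^sub>R (\<psi> x *\<^sub>R b)))"
     "(\<integral>x. N x \<bullet> (indicator \<Omega> x *\<^sub>R (\<psi> x *\<^sub>R b)) \<partial>lebesgue) = 0"
    if P: "C1d \<psi> \<psi>'" for \<psi> \<psi>' b
  proof -
    note a = IBP_H10[OF H1 op bd P, of b] and c = IBP_H10[OF H2 op bd P, of b]
    show "integrable lebesgue (\<lambda>x. N x \<bullet> (indicator \<Omega> x *\<^sub>R (\<psi> x *\<^sub>R b)))"
      unfolding N_def inner_diff_left using a(1) c(1) by (rule Bochner_Integration.integrable_diff)
    show "(\<integral>x. N x \<bullet> (indicator \<Omega> x *\<^sub>R (\<psi> x *\<^sub>R b)) \<partial>lebesgue) = 0"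
      unfolding N_def inner_diff_left using a c by (simp add: Bochner_Integration.integral_diff)
  qed
  have S2: "(\<integral>x. N x \<bullet> (indicator \<Omega> x *\<^sub>R P x) \<partial>lebesgue) = 0" if P: "polynomial_function P" for P :: "'a \<Rightarrow> 'a"
  proof -
    have ex: "\<exists>\<psi>'. C1d (\<lambda>x. P x \<bullet> b) \<psi>'" for b
    proof -
      have "polynomial_function (\<lambda>x. P x \<bullet> b)" using P by (rule polynomial_function_inner)
      then have "real_polynomial_function (\<lambda>x. P x \<bullet> b)" by (simp add: real_polynomial_function_eq)
      then show ?thesis by (rule poly_C1d)
    qed
    have eq: "N x \<bullet> (indicator \<Omega> x *\<^sub>R P x) = (\<Sum>b\<in>Basis. N x \<bullet> (indicator \<Omega> x *\<^sub>R ((P x \<bullet> b) *\<^sub>R b)))" for x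
    proof -
      have "indicator \<Omega> x *\<^sub>R P x = indicator \<Omega> x *\<^sub>R (\<Sum>b\<in>Basis. (P x \<bullet> b) *\<^sub>R b)"
        by (simp add: euclidean_representation)
      also have "\<dots> = (\<Sum>b\<in>Basis. indicator \<Omega> x *\<^sub>R ((P x \<bullet> b) *\<^sub>R b))"
        by (simp add: scaleR_sum_right)
      finally show ?thesis by (simp add: inner_sum_right)
    qed
    have "(\<integral>x. N x \<bullet> (indicator \<Omega> x *\<^sub>R P x) \<partial>lebesgue) =
        (\<Sum>b\<in>Basis. \<integral>x. N x \<bullet> (indicator \<Omega> x *\<^sub>R ((P x \<bullet> b) *\<^sub>R b)) \<partial>lebesgue)"
      unfolding eq
    proof (rule Bochner_Integration.integral_sum)
      fix b :: 'a
      obtain \<psi>' where "C1d (\<lambda>x. P x \<bullet> b) \<psi>'" using ex by blast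
      from S1(1)[OF this] show "integrable lebesgue (\<lambda>x. N x \<bullet> (indicator \<Omega> x *\<^sub>R ((P x \<bullet> b) *\<^sub>R b)))" .
    qed
    also have "\<dots> = 0"
    proof (rule sum.neutral, rule ballI)
      fix b :: 'a
      obtain \<psi>' where "C1d (\<lambda>x. P x \<bullet> b) \<psi>'" using ex by blast
      from S1(2)[OF this] show "(\<integral>x. N x \<bullet> (indicator \<Omega> x *\<^sub>R ((P x \<bullet> b) *\<^sub>R b)) \<partial>lebesgue) = 0" .
    qed
    finally show ?thesis .
  qed
  have S3: "(\<integral>x. N x \<bullet> (indicator \<Omega> x *\<^sub>R W x) \<partial>lebesgue) = 0" if W: "continuous_on UNIV W" for W :: "'a \<Rightarrow> 'a"
  proof -
    have cpt: "compact (closure \<Omega>)" using bd by (simp add: compact_closure)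
    have "\<exists>P. polynomial_function P \<and> (\<forall>x\<in>closure \<Omega>. norm (W x - P x) < ek m)" for m
      by (rule Stone_Weierstrass_polynomial_function[OF cpt _ ek_pos]) (rule continuous_on_subset[OF W], simp)
    then obtain P where P: "\<And>m. polynomial_function (P m)" and Pa: "\<And>m x. x \<in> closure \<Omega> \<Longrightarrow> norm (W x - P m x) < ek m"
      by metis
    have Pc: "continuous_on UNIV (P m)" for m using P by (rule continuous_on_polymonial_function)
    have [measurable]: "P m \<in> borel_measurable lebesgue" "W \<in> borel_measurable lebesgue" for m
    proof -
      have "P m \<in> borel_measurable borel" "W \<in> borel_measurable borel"
        using Pc W by (auto intro: borel_measurable_continuous_onI)
      then show "P m \<in> borel_measurable lebesgue" "W \<in> borel_measurable lebesgue"
        by (simp_all add: measurable_completion)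
    qed
    define f where "f m x = indicator \<Omega> x *\<^sub>R P m x" for m x
    define g where "g x = indicator \<Omega> x *\<^sub>R W x" for x
    have [measurable]: "f m \<in> borel_measurable lebesgue" "g \<in> borel_measurable lebesgue" for m
      unfolding f_def[abs_def] g_def[abs_def] by measurable
    have fL: "integrable lebesgue (\<lambda>x. (norm (f m x))\<^sup>2)" for m
    proof -
      obtain C where "\<And>x. x \<in> \<Omega> \<Longrightarrow> norm (P m x) \<le> C" using cont_bounded_on_bounded[OF bd Pc] by blast
      then show ?thesis unfolding f_def by (rule bounded_ind_L2[OF op bd, rotated]) measurable
    qed
    have gL: "integrable lebesgue (\<lambda>x. (norm (g x))\<^sup>2)"
    proof -
      obtain C where "\<And>x. x \<in> \<Omega> \<Longrightarrow> norm (W x) \<le> C" using cont_bounded_on_bounded[OF bd W] by blast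
      then show ?thesis unfolding g_def by (rule bounded_ind_L2[OF op bd, rotated]) measurable
    qed
    have Lb: "L2d (f m) g lebesgue \<le> ennreal ((ek m)\<^sup>2) * emeasure lebesgue \<Omega>" for m
    proof -
      have "L2d (f m) g lebesgue \<le> (\<integral>\<^sup>+x. ennreal ((ek m)\<^sup>2) * indicator \<Omega> x \<partial>lebesgue)"
        unfolding L2d_def
      proof (rule nn_integral_mono)
        fix x
        show "ennreal ((norm (f m x - g x))\<^sup>2) \<le> ennreal ((ek m)\<^sup>2) * indicator \<Omega> x"
        proof (cases "x \<in> \<Omega>")
          case True
          then have "norm (W x - P m x) < ek m" using Pa closure_subset by blast
          then have "(norm (P m x - W x))\<^sup>2 \<le> (ek m)\<^sup>2"
            by (intro power_mono) (auto simp: norm_minus_commute)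
          then show ?thesis using True by (simp add: f_def g_def ennreal_leI)
        qed (simp add: f_def g_def)
      qed
      also have "\<dots> = ennreal ((ek m)\<^sup>2) * emeasure lebesgue \<Omega>"
        by (rule nn_integral_cmult_indicator) simp
      finally show ?thesis .
    qed
    have "(\<lambda>m. ennreal ((ek m)\<^sup>2)) \<longlonglongrightarrow> ennreal (0\<^sup>2)"
      by (intro tendsto_ennrealI tendsto_power ek_lim)
    then have "(\<lambda>m. emeasure lebesgue \<Omega> * ennreal ((ek m)\<^sup>2)) \<longlonglongrightarrow> emeasure lebesgue \<Omega> * ennreal (0\<^sup>2)"
      using fin by (intro ennreal_tendsto_cmult) auto
    then have lim0: "(\<lambda>m. ennreal ((ek m)\<^sup>2) * emeasure lebesgue \<Omega>) \<longlonglongrightarrow> 0"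
      by (simp add: mult.commute)
    have l: "(\<lambda>m. L2d (f m) g lebesgue) \<longlonglongrightarrow> 0"
      by (rule tendsto_sandwich[OF always_eventually always_eventually tendsto_const lim0]) (simp, rule allI, rule Lb)
    have conv: "(\<lambda>m. \<integral>x. f m x \<bullet> N x \<partial>lebesgue) \<longlonglongrightarrow> (\<integral>x. g x \<bullet> N x \<partial>lebesgue)"
      by (rule CS_conv[OF _ _ _ fL gL NL l]) auto
    have "(\<integral>x. f m x \<bullet> N x \<partial>lebesgue) = 0" for m
      using S2[OF P[of m]] by (simp add: f_def inner_commute)
    then have "(\<integral>x. g x \<bullet> N x \<partial>lebesgue) = 0" using conv by (simp add: LIMSEQ_const_iff)
    then show ?thesis by (simp add: g_def inner_commute)
  qed
  obtain \<phi>1 D\<phi>1 where C1: "\<And>n. C1c \<Omega> (\<phi>1 n) (D\<phi>1 n)" and l1: "(\<lambda>n. L2d (D\<phi>1 n) G1 lebesgue) \<longlonglongrightarrow> 0"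
    using H1 unfolding H10_alt by blast
  obtain \<phi>2 D\<phi>2 where C2: "\<And>n. C1c \<Omega> (\<phi>2 n) (D\<phi>2 n)" and l2: "(\<lambda>n. L2d (D\<phi>2 n) G2 lebesgue) \<longlonglongrightarrow> 0"
    using H2 unfolding H10_alt by blast
  have [measurable]: "D\<phi>1 n \<in> borel_measurable lebesgue" "D\<phi>2 n \<in> borel_measurable lebesgue" for n
    using C1c_meas[OF C1] C1c_meas[OF C2] by auto
  define W where "W n x = D\<phi>1 n x - D\<phi>2 n x" for n x
  have [measurable]: "W n \<in> borel_measurable lebesgue" for n unfolding W_def[abs_def] by measurable
  have Wc: "continuous_on UNIV (W n)" for n
    using C1[of n] C2[of n] unfolding W_def[abs_def] C1c_def by (intro continuous_intros) auto
  have WL: "integrable lebesgue (\<lambda>x. (norm (W n x))\<^sup>2)" for n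
    unfolding W_def by (rule sq_integrable_diff) (use C1c_sq_integrable[OF C1] C1c_sq_integrable[OF C2] in auto)
  have W0: "(\<integral>x. W n x \<bullet> N x \<partial>lebesgue) = 0" for n
  proof -
    have "indicator \<Omega> x *\<^sub>R W n x = W n x" for x
      using C1c_outside(2)[OF C1, of x n] C1c_outside(2)[OF C2, of x n]
      by (cases "x \<in> \<Omega>") (auto simp: W_def)
    then show ?thesis using S3[OF Wc[of n]] by (simp add: inner_commute)
  qed
  have lW: "(\<lambda>n. L2d (W n) N lebesgue) \<longlonglongrightarrow> 0"
  proof (rule ennreal_sandwich0)
    fix n
    have "L2d (W n) N lebesgue \<le> 2 * L2d (W n) (\<lambda>x. G1 x - D\<phi>2 n x) lebesgue + 2 * L2d (\<lambda>x. G1 x - D\<phi>2 n x) N lebesgue"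
      by (rule L2d_tri) auto
    also have "L2d (W n) (\<lambda>x. G1 x - D\<phi>2 n x) lebesgue = L2d (D\<phi>1 n) G1 lebesgue"
      unfolding L2d_def W_def by simp
    also have "L2d (\<lambda>x. G1 x - D\<phi>2 n x) N lebesgue = L2d (D\<phi>2 n) G2 lebesgue"
      unfolding L2d_def N_def by (simp add: norm_minus_commute)
    finally show "L2d (W n) N lebesgue \<le> 2 * L2d (D\<phi>1 n) G1 lebesgue + 2 * L2d (D\<phi>2 n) G2 lebesgue" .
  qed (use l1 l2 in auto)
  have "(\<lambda>n. \<integral>x. W n x \<bullet> N x \<partial>lebesgue) \<longlonglongrightarrow> (\<integral>x. N x \<bullet> N x \<partial>lebesgue)"
    by (rule CS_conv[OF _ _ _ WL NL NL lW]) auto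
  then have "(\<integral>x. N x \<bullet> N x \<partial>lebesgue) = 0" using W0 by (simp add: LIMSEQ_const_iff)
  then have "(\<integral>x. (norm (N x))\<^sup>2 \<partial>lebesgue) = 0" by (simp add: power2_norm_eq_inner)
  then have "AE x in lebesgue. (norm (N x))\<^sup>2 = 0"
    by (subst (asm) integral_nonneg_eq_0_iff_AE[OF NL]) auto
  then show ?thesis by eventually_elim (simp add: N_def)
qed



lemma open_AE_not_empty:
  fixes S :: "'a::euclidean_space set"
  assumes "open S" "S \<noteq> {}" "AE x in lebesgue. x \<notin> S"
  shows False
proof -
  obtain y where y: "y \<in> S" using assms(2) by blast
  have "AE x \<in> S in lebesgue. x \<in> {}" using assms(3) by eventually_elim auto
  from mem_closed_if_AE_lebesgue_open[OF assms(1) closed_empty this y] show False by simp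
qed

lemma pos_integrals:
  fixes w g :: "'a::euclidean_space \<Rightarrow> real"
  assumes H: "H10 \<Omega> w Gw" and op: "open \<Omega>" and bd: "bounded \<Omega>"
    and gm[measurable]: "g \<in> borel_measurable lebesgue" and gb: "AE x in lebesgue. 0 < g x \<and> g x \<le> 1"
    and w0: "\<And>x. 0 \<le> w x" and wout: "\<And>x. x \<notin> \<Omega> \<Longrightarrow> w x = 0"
    and S: "open S" "S \<noteq> {}" "\<And>x. x \<in> S \<Longrightarrow> w x > 0"
  shows "(\<integral>x. (w x)\<^sup>2 \<partial>lebesgue) > 0" "(\<integral>x. g x * w x \<partial>lebesgue) > 0"
proof -
  note fin = bounded_open_fin[OF op bd]
  have [measurable]: "\<Omega> \<in> sets lebesgue" using fin by simp
  have wm[measurable]: "w \<in> borel_measurable lebesgue" using H10_meas[OF H] by simp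
  have wL: "integrable lebesgue (\<lambda>x. (w x)\<^sup>2)" using H10_facts(1)[OF H op] .
  have notS: "AE x in lebesgue. x \<notin> S" if "AE x in lebesgue. w x = 0"
    using that by eventually_elim (use S(3) in force)
  show "(\<integral>x. (w x)\<^sup>2 \<partial>lebesgue) > 0"
  proof -
    have ge: "(\<integral>x. (w x)\<^sup>2 \<partial>lebesgue) \<ge> 0" by simp
    have "(\<integral>x. (w x)\<^sup>2 \<partial>lebesgue) \<noteq> 0"
    proof
      assume "(\<integral>x. (w x)\<^sup>2 \<partial>lebesgue) = 0"
      then have "AE x in lebesgue. (w x)\<^sup>2 = 0"
        by (subst (asm) integral_nonneg_eq_0_iff_AE[OF wL]) auto
      then have "AE x in lebesgue. w x = 0" by eventually_elim simp
      from open_AE_not_empty[OF S(1,2) notS[OF this]] show False .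
    qed
    with ge show ?thesis by linarith
  qed
  have gwI: "integrable lebesgue (\<lambda>x. g x * w x)"
  proof (rule Bochner_Integration.integrable_bound)
    show "integrable lebesgue (\<lambda>x. (w x)\<^sup>2 + indicator \<Omega> x)"
      using wL fin by (intro Bochner_Integration.integrable_add integrable_real_indicator) auto
    show "(\<lambda>x. g x * w x) \<in> borel_measurable lebesgue" by measurable
    show "AE x in lebesgue. norm (g x * w x) \<le> norm ((w x)\<^sup>2 + indicator \<Omega> x)"
      using gb
    proof eventually_elim
      case (elim x)
      have "\<bar>g x * w x\<bar> \<le> w x" using elim w0[of x] by (simp add: abs_mult mult_left_le_one_le)
      moreover have "w x \<le> (w x)\<^sup>2 + indicator \<Omega> x"
      proof (cases "x \<in> \<Omega>")
        case True
        have "0 \<le> (w x - 1)\<^sup>2" by simp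
        then have "w x \<le> (w x)\<^sup>2 + 1" using w0[of x] by (simp add: power2_diff)
        then show ?thesis using True by simp
      qed (simp add: wout)
      ultimately show ?case by simp
    qed
  qed
  show "(\<integral>x. g x * w x \<partial>lebesgue) > 0"
  proof -
    have nn: "AE x in lebesgue. 0 \<le> g x * w x" using gb by eventually_elim (simp add: w0)
    have ge: "(\<integral>x. g x * w x \<partial>lebesgue) \<ge> 0" by (rule integral_nonneg_AE[OF nn])
    have "(\<integral>x. g x * w x \<partial>lebesgue) \<noteq> 0"
    proof
      assume "(\<integral>x. g x * w x \<partial>lebesgue) = 0"
      then have "AE x in lebesgue. g x * w x = 0"
        by (subst (asm) integral_nonneg_eq_0_iff_AE[OF gwI nn])
      then have "AE x in lebesgue. w x = 0" using gb by eventually_elim auto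
      from open_AE_not_empty[OF S(1,2) notS[OF this]] show False .
    qed
    with ge show ?thesis by linarith
  qed
qed

theorem proposition2p5:
  fixes \<Omega> :: "'a::euclidean_space set" and g u :: "'a \<Rightarrow> real" and \<xi> :: real
  assumes "open \<Omega>" and "bounded \<Omega>"
    and "g \<in> borel_measurable lebesgue"
    and "AE x in lebesgue. 0 < g x \<and> g x \<le> 1"
    and "twisted_eigenfunction \<Omega> g u"
    and "continuous_on \<Omega> u"
    and "nodal_domains \<Omega> u = {{x \<in> \<Omega>. u x > 0}, {x \<in> \<Omega>. u x < 0}}"
    and "\<forall>\<psi>\<in>H10set \<Omega>.
           (\<integral> x. wgrad \<Omega> u x \<bullet> wgrad \<Omega> \<psi> x \<partial>lebesgue)
             = lambda1g \<Omega> g * (\<integral> x. u x * \<psi> x \<partial>lebesgue) + \<xi> * (\<integral> x. g x * \<psi> x \<partial>lebesgue)"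
  shows "(Rq \<Omega> (\<lambda>x. if x \<in> \<Omega> \<and> u x > 0 then u x else 0)
            \<le> Rq \<Omega> (\<lambda>x. if x \<in> \<Omega> \<and> u x < 0 then - u x else 0) \<longleftrightarrow> \<xi> \<le> 0)
       \<and> (Rq \<Omega> (\<lambda>x. if x \<in> \<Omega> \<and> u x > 0 then u x else 0)
            = Rq \<Omega> (\<lambda>x. if x \<in> \<Omega> \<and> u x < 0 then - u x else 0) \<longleftrightarrow> \<xi> = 0)"
proof -
  note op = assms(1) and bd = assms(2) and gm = assms(3) and gb = assms(4)
  note fin = bounded_open_fin[OF op bd]
  have [measurable]: "\<Omega> \<in> sets lebesgue" using fin by simp
  have [measurable]: "g \<in> borel_measurable lebesgue" by (rule gm)
  have "u \<in> H10set \<Omega>" using assms(5) by (simp add: twisted_eigenfunction_def twisted_adm_def)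
  then have "\<exists>G. H10 \<Omega> u G" by (simp add: H10set_def)
  then have HG: "H10 \<Omega> u (wgrad \<Omega> u)" unfolding wgrad_def by (rule someI_ex)
  define G where "G = wgrad \<Omega> u"
  have HG': "H10 \<Omega> u G" using HG by (simp add: G_def)
  have [measurable]: "u \<in> borel_measurable lebesgue" "G \<in> borel_measurable lebesgue"
    using H10_meas[OF HG'] by auto
  define up where "up x = (if x \<in> \<Omega> \<and> u x > 0 then u x else 0)" for x
  define um where "um x = (if x \<in> \<Omega> \<and> u x < 0 then - u x else 0)" for x
  define Gp where "Gp x = (if x \<in> \<Omega> \<and> u x > 0 then G x else 0)" for x
  define Gm where "Gm x = (if x \<in> \<Omega> \<and> u x < 0 then - G x else 0)" for x
  have [measurable]: "up \<in> borel_measurable lebesgue" "um \<in> borel_measurable lebesgue"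
    "Gp \<in> borel_measurable lebesgue" "Gm \<in> borel_measurable lebesgue"
  proof -
    have s1: "{x. x \<in> \<Omega> \<and> u x > 0} \<in> sets lebesgue"
    proof -
      have "{x. x \<in> \<Omega> \<and> u x > 0} = \<Omega> \<inter> {x. u x \<in> {0<..}}" by auto
      moreover have "{x. u x \<in> {0<..}} \<in> sets lebesgue"
        by (rule lebesgue_measurable_vimage_borel) auto
      ultimately show ?thesis using fin by auto
    qed
    have s2: "{x. x \<in> \<Omega> \<and> u x < 0} \<in> sets lebesgue"
    proof -
      have "{x. x \<in> \<Omega> \<and> u x < 0} = \<Omega> \<inter> {x. u x \<in> {..<0}}" by auto
      moreover have "{x. u x \<in> {..<0}} \<in> sets lebesgue"
        by (rule lebesgue_measurable_vimage_borel) auto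
      ultimately show ?thesis using fin by auto
    qed
    have i: "(\<lambda>x. if x \<in> A then f x else 0) \<in> borel_measurable lebesgue"
      if "A \<in> sets lebesgue" "f \<in> borel_measurable lebesgue" for A and f :: "'a \<Rightarrow> 'c::euclidean_space"
      by (rule measurable_If_set) (use that in auto)
    have mu: "(\<lambda>x. - u x) \<in> borel_measurable lebesgue" "(\<lambda>x. - G x) \<in> borel_measurable lebesgue"
      by (auto intro!: borel_measurable_uminus)
    show "up \<in> borel_measurable lebesgue" using i[OF s1, of u] by (simp add: up_def[abs_def])
    show "um \<in> borel_measurable lebesgue" using i[OF s2 mu(1)] by (simp add: um_def[abs_def])
    show "Gp \<in> borel_measurable lebesgue" using i[OF s1, of G] by (simp add: Gp_def[abs_def])
    show "Gm \<in> borel_measurable lebesgue" using i[OF s2 mu(2)] by (simp add: Gm_def[abs_def])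
  qed
  have uo: "AE x in lebesgue. x \<notin> \<Omega> \<longrightarrow> u x = 0" using H10_facts(3)[OF HG' op] .
  have Go: "AE x in lebesgue. x \<notin> \<Omega> \<longrightarrow> G x = 0" using H10_facts(4)[OF HG' op] .
  have Hp: "H10 \<Omega> up Gp"
  proof (rule H10_cong_AE[OF H10_pos[OF HG' op]])
    show "AE x in lebesgue. max (u x) 0 = up x" using uo by eventually_elim (auto simp: up_def)
    show "AE x in lebesgue. (if u x > 0 then G x else 0) = Gp x" using Go by eventually_elim (auto simp: Gp_def)
  qed auto
  have Hm: "H10 \<Omega> um Gm"
  proof (rule H10_cong_AE[OF H10_pos[OF H10_neg[OF HG'] op]])
    show "AE x in lebesgue. max (- u x) 0 = um x" using uo by eventually_elim (auto simp: um_def)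
    show "AE x in lebesgue. (if - u x > 0 then - G x else 0) = Gm x" using Go by eventually_elim (auto simp: Gm_def)
  qed auto
  have upH: "up \<in> H10set \<Omega>" and umH: "um \<in> H10set \<Omega>" using Hp Hm by (auto simp: H10set_def)
  have Hwp: "H10 \<Omega> up (wgrad \<Omega> up)" unfolding wgrad_def by (rule someI[of "H10 \<Omega> up" Gp, OF Hp])
  have Hwm: "H10 \<Omega> um (wgrad \<Omega> um)" unfolding wgrad_def by (rule someI[of "H10 \<Omega> um" Gm, OF Hm])
  have [measurable]: "wgrad \<Omega> up \<in> borel_measurable lebesgue" "wgrad \<Omega> um \<in> borel_measurable lebesgue"
    using H10_meas(2)[OF Hwp] H10_meas(2)[OF Hwm] by auto
  have wp: "AE x in lebesgue. wgrad \<Omega> up x = Gp x" by (rule grad_unique[OF Hwp Hp op bd])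
  have wm: "AE x in lebesgue. wgrad \<Omega> um x = Gm x" by (rule grad_unique[OF Hwm Hm op bd])
  let ?L = "lambda1g \<Omega> g"
  define Pp where "Pp = (\<integral>x. (norm (Gp x))\<^sup>2 \<partial>lebesgue)"
  define Pm where "Pm = (\<integral>x. (norm (Gm x))\<^sup>2 \<partial>lebesgue)"
  define U where "U = (\<integral>x. (up x)\<^sup>2 \<partial>lebesgue)"
  define V where "V = (\<integral>x. (um x)\<^sup>2 \<partial>lebesgue)"
  define A where "A = (\<integral>x. g x * up x \<partial>lebesgue)"
  define B where "B = (\<integral>x. g x * um x \<partial>lebesgue)"
  have e1: "(\<integral>x. G x \<bullet> wgrad \<Omega> up x \<partial>lebesgue) = Pp"
    unfolding Pp_def
    by (rule integral_cong_AE) (use wp in \<open>auto simp: Gp_def power2_norm_eq_inner elim!: eventually_mono\<close>)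
  have e2: "(\<integral>x. (norm (wgrad \<Omega> up x))\<^sup>2 \<partial>lebesgue) = Pp"
    unfolding Pp_def by (rule integral_cong_AE) (use wp in \<open>auto elim!: eventually_mono\<close>)
  have e3: "(\<integral>x. u x * up x \<partial>lebesgue) = U"
    unfolding U_def by (rule Bochner_Integration.integral_cong) (auto simp: up_def power2_eq_square)
  have eqp: "Pp = ?L * U + \<xi> * A"
    using bspec[OF assms(8) upH] e1 e3 by (simp add: G_def A_def)
  have Rp: "Rq \<Omega> up = Pp / U" unfolding Rq_def e2 U_def ..
  have e1m: "(\<integral>x. G x \<bullet> wgrad \<Omega> um x \<partial>lebesgue) = (\<integral>x. - (norm (Gm x))\<^sup>2 \<partial>lebesgue)"
    by (rule integral_cong_AE) (use wm in \<open>auto simp: Gm_def power2_norm_eq_inner elim!: eventually_mono\<close>)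
  have e2m: "(\<integral>x. (norm (wgrad \<Omega> um x))\<^sup>2 \<partial>lebesgue) = Pm"
    unfolding Pm_def by (rule integral_cong_AE) (use wm in \<open>auto elim!: eventually_mono\<close>)
  have e3m: "(\<integral>x. u x * um x \<partial>lebesgue) = (\<integral>x. - (um x)\<^sup>2 \<partial>lebesgue)"
    by (rule Bochner_Integration.integral_cong) (auto simp: um_def power2_eq_square)
  have eqm: "- Pm = ?L * (- V) + \<xi> * B"
    using bspec[OF assms(8) umH] e1m e3m by (simp add: G_def B_def Pm_def V_def)
  have Rm: "Rq \<Omega> um = Pm / V" unfolding Rq_def e2m V_def ..
  have Sp: "open {x \<in> \<Omega>. u x > 0}" "{x \<in> \<Omega>. u x > 0} \<noteq> {}"
    "open {x \<in> \<Omega>. u x < 0}" "{x \<in> \<Omega>. u x < 0} \<noteq> {}"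
  proof -
    have ov: "open (u -` B \<inter> \<Omega>)" if "open B" for B
      using assms(6) op that by (simp add: continuous_on_open_vimage)
    have "{x \<in> \<Omega>. u x > 0} = u -` {0<..} \<inter> \<Omega>" by auto
    then show "open {x \<in> \<Omega>. u x > 0}" using ov[of "{0<..}"] by simp
    have "{x \<in> \<Omega>. u x < 0} = u -` {..<0} \<inter> \<Omega>" by auto
    then show "open {x \<in> \<Omega>. u x < 0}" using ov[of "{..<0}"] by simp
    have c: "{x \<in> \<Omega>. u x > 0} \<in> components {x \<in> \<Omega>. u x \<noteq> 0}" "{x \<in> \<Omega>. u x < 0} \<in> components {x \<in> \<Omega>. u x \<noteq> 0}"
      using assms(7) by (auto simp: nodal_domains_def)
    show "{x \<in> \<Omega>. u x > 0} \<noteq> {}" by (rule in_components_nonempty[OF c(1)])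
    show "{x \<in> \<Omega>. u x < 0} \<noteq> {}" by (rule in_components_nonempty[OF c(2)])
  qed
  have posp: "U > 0" "A > 0"
    unfolding U_def A_def
    by (rule pos_integrals[OF Hp op bd gm gb _ _ Sp(1,2)]; auto simp: up_def)+
  have posm: "V > 0" "B > 0"
    unfolding V_def B_def
    by (rule pos_integrals[OF Hm op bd gm gb _ _ Sp(3,4)]; auto simp: um_def)+
  have rp: "Pp / U = ?L + \<xi> * (A / U)" using eqp posp by (simp add: field_simps)
  have rm: "Pm / V = ?L - \<xi> * (B / V)" using eqm posm by (simp add: field_simps)
  define a where "a = A / U"
  define b where "b = B / V"
  have "a > 0" "b > 0" using posp posm by (simp_all add: a_def b_def)
  then have ab: "a + b > 0" by simp
  have i1: "(?L + \<xi> * a \<le> ?L - \<xi> * b) \<longleftrightarrow> \<xi> * (a + b) \<le> 0" by (simp add: algebra_simps)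
  have i2: "\<xi> * (a + b) \<le> 0 \<longleftrightarrow> \<xi> \<le> 0" using ab by (simp add: mult_le_0_iff)
  have i3: "(?L + \<xi> * a = ?L - \<xi> * b) \<longleftrightarrow> \<xi> * (a + b) = 0" by (simp add: algebra_simps)
  have i4: "\<xi> * (a + b) = 0 \<longleftrightarrow> \<xi> = 0" using ab by simp
  show ?thesis
    unfolding up_def[symmetric] um_def[symmetric] Rp Rm rp rm a_def[symmetric] b_def[symmetric]
    using i1 i2 i3 i4 by blast
qed


end
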